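(* Let $\mathcal{T},\mathcal{W}\in\mathbb{K}^{R\times R\times K}$. Assume $\mathcal{T}$ has $\mathbb{K}$-rank $R$ with CPD $[\![\mathbf{A},\mathbf{B},\mathbf{C}]\!]$ where $\mathbf{A},\mathbf{B}\in\mathbb{K}^{R\times R}$ are invertible and the columns of $\mathbf{C}$ have unit norm; let $\mathscr{L}_1,\dots,\mathscr{L}_R$ be the spectrum of $\mathcal{T}$ (the spans of the columns of $\mathbf{C}$), and set $\mathcal{E}=\mathcal{T}-\mathcal{W}$. If $\mathscr{W}$ is a JGE value of $\mathcal{W}$ with geometric multiplicity at least one, then $$\min_k\chi(\mathscr{L}_k,\mathscr{W})\leq\sqrt{R}\,\big\|\mathcal{E}\cdot_1\mathbf{A}^{-1}\cdot_2\mathbf{B}^{-1}\cdot_3\mathbf{P}_{\mathscr{W}^\perp}\big\|_{\mathrm{sp}}\leq\frac{\sqrt{R}\,\|\mathcal{E}\|_{\mathrm{sp}}}{\sigma_{\min}(\mathbf{A})\sigma_{\min}(\mathbf{B})},$$ where $\mathbf{P}_{\mathscr{W}^\perp}$ is the orthogonal projection of $\mathbb{K}^K$ onto the orthogonal complement of $\mathscr{W}$. Consequently, if $\mathcal{W}$ is slice mix invertible of border $\mathbb{K}$-rank $R$, then $$\mathrm{sv}[\mathcal{T},\mathcal{W}]\leq\sqrt{R}\,\big\|\mathcal{E}\cdot_1\mathbf{A}^{-1}\cdot_2\mathbf{B}^{-1}\big\|_{\mathrm{sp}}\leq\frac{\sqrt{R}\,\|\mathcal{E}\|_{\mathrm{sp}}}{\sigma_{\min}(\mathbf{A})\sigma_{\min}(\mathbf{B})}.$$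 Moreover, the factor $\sqrt{R}$ may be dropped from all these inequalities in each of the following cases: (1) $K=2$; (2) $\mathcal{W}$ is slice mix invertible and has $\mathbb{K}$-rank $R$ with a CPD $[\![\mathbf{A}_{\mathcal{W}},\mathbf{B}_{\mathcal{W}},\mathbf{C}_{\mathcal{W}}]\!]$ in which $\mathbf{A}_{\mathcal{W}}=\mathbf{A}$ or $\mathbf{B}_{\mathcal{W}}=\mathbf{B}$. In particular, in these cases $\mathrm{sv}[\mathcal{T},\mathcal{W}]\leq\|\mathcal{E}\cdot_1\mathbf{A}^{-1}\cdot_2\mathbf{B}^{-1}\|_{\mathrm{sp}}\leq\|\mathcal{E}\|_{\mathrm{sp}}/(\sigma_{\min}(\mathbf{A})\sigma_{\min}(\mathbf{B}))$.
   Context: $\mathbb{K}$ denotes $\mathbb{R}$ or $\mathbb{C}$; $\sigma_{\min}$ is the smallest singular value; $\cdot_i\mathbf{M}$ applies $\mathbf{M}$ to every mode-$i$ fiber. CPD $[\![\mathbf{A},\mathbf{B},\mathbf{C}]\!]=\sum_r\mathbf{a}_r\otimes\mathbf{b}_r\otimes\mathbf{c}_r$ with the minimal number of terms; $\mathbb{K}$-rank and border $\mathbb{K}$-rank (least $R$ such that the tensor is a limit of tensors of $\mathbb{K}$-rank at most $R$) as usual. For $\mathcal{X}$ with slices $\mathbf{X}_k$: slice mix invertible means some linear combination of slices is invertible; a nonzero $\mathbf{x}$ is a JGE vector if $\mathbf{X}_\ell\mathbf{x}=\lambda_\ell\mathbf{y}$ for all $\ell$ for some $\boldsymbol{\lambda}$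 and nonzero $\mathbf{y}$, and $\mathrm{span}(\boldsymbol{\lambda})$ is then a JGE value; its geometric multiplicity is the dimension of the span of JGE vectors paired with it. With $p_{\mathcal{X}}(\boldsymbol{\gamma})=\det(\sum_k\gamma_k\mathbf{X}_k)$, if $p_{\mathcal{X}}$ is a product of $R$ linear forms $\prod_r(\sum_k\lambda_{r,k}\gamma_k)$ the spectrum of $\mathcal{X}$ is the list $\mathrm{span}(\boldsymbol{\lambda}_r)$, $r=1,\dots,R$. Chordal metric $\chi$: sine of the angle between one-dimensional subspaces. Spectral variation: $\mathrm{sv}[\mathcal{T}_1,\mathcal{T}_2]=\max_i\min_j\chi(\mathscr{L}_{1,j},\mathscr{L}_{2,i})$ for spectra $\{\mathscr{L}_{1,j}\},\{\mathscr{L}_{2,i}\}$. Spectral norm $\|\mathcal{M}\|_{\mathrm{sp}}=\max_{\|\mathbf{x}\|=\|\mathbf{y}\|=\|\mathbf{z}\|=1}|\mathcal{M}\cdot_1\mathbf{x}\cdot_2\mathbf{y}\cdot_3\mathbf{z}|$. *)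

theory Defs
  imports "HOL-Analysis.Analysis"
begin

text \<open>The scalar field K is encoded by a set Ks of complex numbers,
  Ks = Reals (K = R) or Ks = UNIV (K = C). All objects are complex-valued and are
  required to take values in Ks. A tensor in K^(I x J x K) is a function
  of type 'i => 'j => 'k => complex over finite index types; R = CARD('r),
  K = CARD('k). Matrices are complex^'col^'row (entry A$i$j).\<close>

type_synonym ('i,'j,'k) tensor = "'i \<Rightarrow> 'j \<Rightarrow> 'k \<Rightarrow> complex"

definition field_K :: "complex set \<Rightarrow> bool" where
  "field_K Ks \<longleftrightarrow> Ks = \<real> \<or> Ks = UNIV"

definition vec_in :: "complex set \<Rightarrow> complex^'n \<Rightarrow> bool" where
  "vec_in Ks v \<longleftrightarrow> (\<forall>i. v$i \<in> Ks)"

definition mat_in :: "complex set \<Rightarrow> complex^'n^'m \<Rightarrow> bool" where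
  "mat_in Ks M \<longleftrightarrow> (\<forall>i j. M$i$j \<in> Ks)"

definition tensor_in :: "complex set \<Rightarrow> ('i,'j,'k) tensor \<Rightarrow> bool" where
  "tensor_in Ks X \<longleftrightarrow> (\<forall>i j k. X i j k \<in> Ks)"

definition hinner :: "complex^'n \<Rightarrow> complex^'n \<Rightarrow> complex" where
  "hinner u v = (\<Sum>i\<in>UNIV. u$i * cnj (v$i))"

definition cpd :: "complex^'r^'i \<Rightarrow> complex^'r^'j \<Rightarrow> complex^'r^'k \<Rightarrow> ('i,'j,'k) tensor" where
  "cpd A B C = (\<lambda>i j k. \<Sum>r\<in>UNIV. A$i$r * B$j$r * C$k$r)"

definition rank_le :: "complex set \<Rightarrow> ('i::finite,'j::finite,'k::finite) tensor \<Rightarrow> nat \<Rightarrow> bool" where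
  "rank_le Ks X n \<longleftrightarrow> (\<exists>(a::nat \<Rightarrow> complex^'i) (b::nat \<Rightarrow> complex^'j) (c::nat \<Rightarrow> complex^'k).
      (\<forall>r<n. vec_in Ks (a r) \<and> vec_in Ks (b r) \<and> vec_in Ks (c r)) \<and>
      X = (\<lambda>i j k. \<Sum>r<n. (a r)$i * (b r)$j * (c r)$k))"

definition K_rank :: "complex set \<Rightarrow> ('i::finite,'j::finite,'k::finite) tensor \<Rightarrow> nat" where
  "K_rank Ks X = (LEAST n. rank_le Ks X n)"

definition border_K_rank :: "complex set \<Rightarrow> ('i::finite,'j::finite,'k::finite) tensor \<Rightarrow> nat" where
  "border_K_rank Ks X = (LEAST n. \<exists>S :: nat \<Rightarrow> ('i,'j,'k) tensor.
      (\<forall>m. tensor_in Ks (S m) \<and> K_rank Ks (S m) \<le> n) \<and>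
      (\<forall>i j k. (\<lambda>m. S m i j k) \<longlonglongrightarrow> X i j k))"

definition slice :: "('r,'r,'k) tensor \<Rightarrow> 'k \<Rightarrow> complex^'r^'r" where
  "slice X k = (\<chi> i j. X i j k)"

definition slice_comb :: "('r,'r,'k) tensor \<Rightarrow> complex^'k \<Rightarrow> complex^'r^'r" where
  "slice_comb X \<gamma> = (\<chi> i j. \<Sum>k\<in>UNIV. \<gamma>$k * X i j k)"

definition slice_mix_invertible :: "complex set \<Rightarrow> ('r::finite,'r,'k::finite) tensor \<Rightarrow> bool" where
  "slice_mix_invertible Ks X \<longleftrightarrow> (\<exists>\<gamma>. vec_in Ks \<gamma> \<and> det (slice_comb X \<gamma>) \<noteq> 0)"

definition kspan :: "complex set \<Rightarrow> complex^'n \<Rightarrow> (complex^'n) set" where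
  "kspan Ks v = {c *s v | c. c \<in> Ks}"

definition JGE_pair :: "complex set \<Rightarrow> ('r::finite,'r,'k::finite) tensor \<Rightarrow> complex^'r \<Rightarrow> complex^'k \<Rightarrow> bool" where
  "JGE_pair Ks X x lam \<longleftrightarrow> vec_in Ks x \<and> x \<noteq> 0 \<and> vec_in Ks lam \<and>
     (\<exists>y. vec_in Ks y \<and> y \<noteq> 0 \<and> (\<forall>l. slice X l *v x = lam$l *s y))"

text \<open>JGE value span(lambda); lambda nonzero so that it is a one-dimensional subspace
  (the chordal metric is only defined for lines).\<close>
definition JGE_value :: "complex set \<Rightarrow> ('r::finite,'r,'k::finite) tensor \<Rightarrow> (complex^'k) set \<Rightarrow> bool" where
  "JGE_value Ks X L \<longleftrightarrow> (\<exists>x lam. JGE_pair Ks X x lam \<and> lam \<noteq> 0 \<and> L = kspan Ks lam)"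

definition K_indep :: "complex set \<Rightarrow> nat \<Rightarrow> (nat \<Rightarrow> complex^'n) \<Rightarrow> bool" where
  "K_indep Ks n xs \<longleftrightarrow> (\<forall>c. (\<forall>i<n. c i \<in> Ks) \<longrightarrow> (\<Sum>i<n. c i *s xs i) = 0 \<longrightarrow> (\<forall>i<n. c i = 0))"

definition geom_mult :: "complex set \<Rightarrow> ('r::finite,'r,'k::finite) tensor \<Rightarrow> (complex^'k) set \<Rightarrow> nat" where
  "geom_mult Ks X L = (GREATEST n. \<exists>xs. (\<forall>i<n. \<exists>lam. JGE_pair Ks X (xs i) lam \<and> L = kspan Ks lam)
                                         \<and> K_indep Ks n xs)"

definition line_rep :: "complex set \<Rightarrow> (complex^'n) set \<Rightarrow> complex^'n" where
  "line_rep Ks L = (SOME u. u \<noteq> 0 \<and> L = kspan Ks u)"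

definition chordal_vec :: "complex^'n \<Rightarrow> complex^'n \<Rightarrow> real" where
  "chordal_vec u v = sqrt (1 - (cmod (hinner u v))\<^sup>2 / ((norm u)\<^sup>2 * (norm v)\<^sup>2))"

definition chordal :: "complex set \<Rightarrow> (complex^'n) set \<Rightarrow> (complex^'n) set \<Rightarrow> real" where
  "chordal Ks L1 L2 = chordal_vec (line_rep Ks L1) (line_rep Ks L2)"

definition proj_perp :: "complex set \<Rightarrow> (complex^'k) set \<Rightarrow> complex^'k^'k" where
  "proj_perp Ks L = (let w = line_rep Ks L in
      (\<chi> i j. (if i = j then 1 else 0) - w$i * cnj (w$j) / complex_of_real ((norm w)\<^sup>2)))"

definition mode1 :: "('i,'j,'k) tensor \<Rightarrow> complex^'i^'a \<Rightarrow> ('a,'j,'k) tensor" where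
  "mode1 X M = (\<lambda>a j k. \<Sum>i\<in>UNIV. M$a$i * X i j k)"
definition mode2 :: "('i,'j,'k) tensor \<Rightarrow> complex^'j^'a \<Rightarrow> ('i,'a,'k) tensor" where
  "mode2 X M = (\<lambda>i a k. \<Sum>j\<in>UNIV. M$a$j * X i j k)"
definition mode3 :: "('i,'j,'k) tensor \<Rightarrow> complex^'k^'a \<Rightarrow> ('i,'j,'a) tensor" where
  "mode3 X M = (\<lambda>i j a. \<Sum>k\<in>UNIV. M$a$k * X i j k)"

definition sp_norm :: "complex set \<Rightarrow> ('i::finite,'j::finite,'k::finite) tensor \<Rightarrow> real" where
  "sp_norm Ks M = Sup {cmod (\<Sum>i\<in>UNIV. \<Sum>j\<in>UNIV. \<Sum>k\<in>UNIV. M i j k * x$i * y$j * z$k) | x y z.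
       vec_in Ks x \<and> vec_in Ks y \<and> vec_in Ks z \<and> norm x = 1 \<and> norm y = 1 \<and> norm z = 1}"

definition sigma_min :: "complex^'n^'n \<Rightarrow> real" where
  "sigma_min A = Inf {norm (A *v x) | x. norm x = 1}"

definition is_spectrum :: "complex set \<Rightarrow> ('r::finite,'r,'k::finite) tensor \<Rightarrow> ('r \<Rightarrow> complex^'k) \<Rightarrow> bool" where
  "is_spectrum Ks X \<Lambda> \<longleftrightarrow> (\<forall>r. vec_in Ks (\<Lambda> r) \<and> \<Lambda> r \<noteq> 0) \<and>
     (\<forall>\<gamma>. vec_in Ks \<gamma> \<longrightarrow> det (slice_comb X \<gamma>) = (\<Prod>r\<in>UNIV. \<Sum>k\<in>UNIV. (\<Lambda> r)$k * \<gamma>$k))"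

definition spec_var :: "complex set \<Rightarrow> ('r::finite \<Rightarrow> complex^'k) \<Rightarrow> ('r \<Rightarrow> complex^'k) \<Rightarrow> real" where
  "spec_var Ks \<Lambda>1 \<Lambda>2 = Max (range (\<lambda>i. Min (range (\<lambda>j. chordal Ks (kspan Ks (\<Lambda>1 j)) (kspan Ks (\<Lambda>2 i))))))"

end

theory Submission
  imports Defs
begin

lemma Ks_cases: "field_K Ks \<Longrightarrow> Ks = \<real> \<or> Ks = UNIV" by (simp add: field_K_def)

lemma Ks_0[simp]: "field_K Ks \<Longrightarrow> 0 \<in> Ks" by (auto simp: field_K_def)
lemma Ks_1[simp]: "field_K Ks \<Longrightarrow> 1 \<in> Ks" by (auto simp: field_K_def)
lemma Ks_of_real[simp]: "field_K Ks \<Longrightarrow> complex_of_real r \<in> Ks" by (auto simp: field_K_def)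
lemma Ks_add[intro]: "field_K Ks \<Longrightarrow> a \<in> Ks \<Longrightarrow> b \<in> Ks \<Longrightarrow> a + b \<in> Ks" by (auto simp: field_K_def)
lemma Ks_diff[intro]: "field_K Ks \<Longrightarrow> a \<in> Ks \<Longrightarrow> b \<in> Ks \<Longrightarrow> a - b \<in> Ks" by (auto simp: field_K_def)
lemma Ks_uminus[intro]: "field_K Ks \<Longrightarrow> a \<in> Ks \<Longrightarrow> - a \<in> Ks" by (auto simp: field_K_def)
lemma Ks_mult[intro]: "field_K Ks \<Longrightarrow> a \<in> Ks \<Longrightarrow> b \<in> Ks \<Longrightarrow> a * b \<in> Ks" by (auto simp: field_K_def)
lemma Ks_divide[intro]: "field_K Ks \<Longrightarrow> a \<in> Ks \<Longrightarrow> b \<in> Ks \<Longrightarrow> a / b \<in> Ks" by (auto simp: field_K_def)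
lemma Ks_cnj[intro]: "field_K Ks \<Longrightarrow> a \<in> Ks \<Longrightarrow> cnj a \<in> Ks" by (auto simp: field_K_def Reals_cnj_iff)
lemma Ks_sum[intro]: "field_K Ks \<Longrightarrow> (\<And>x. x \<in> S \<Longrightarrow> f x \<in> Ks) \<Longrightarrow> sum f S \<in> Ks"
  by (auto simp: field_K_def intro: sum_in_Reals)
lemma Ks_prod[intro]: "field_K Ks \<Longrightarrow> (\<And>x. x \<in> S \<Longrightarrow> f x \<in> Ks) \<Longrightarrow> prod f S \<in> Ks"
  by (auto simp: field_K_def intro: prod_in_Reals)
lemma Ks_inv[intro]: "field_K Ks \<Longrightarrow> a \<in> Ks \<Longrightarrow> inverse a \<in> Ks" by (auto simp: field_K_def)

lemma vec_in_scale[intro]: "field_K Ks \<Longrightarrow> c \<in> Ks \<Longrightarrow> vec_in Ks v \<Longrightarrow> vec_in Ks (c *s v)"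
  by (auto simp: vec_in_def)
lemma vec_in_add[intro]: "field_K Ks \<Longrightarrow> vec_in Ks u \<Longrightarrow> vec_in Ks v \<Longrightarrow> vec_in Ks (u + v)"
  by (auto simp: vec_in_def)
lemma vec_in_diff[intro]: "field_K Ks \<Longrightarrow> vec_in Ks u \<Longrightarrow> vec_in Ks v \<Longrightarrow> vec_in Ks (u - v)"
  by (auto simp: vec_in_def)
lemma vec_in_0[simp]: "field_K Ks \<Longrightarrow> vec_in Ks 0"
  by (auto simp: vec_in_def)
lemma vec_in_axis[intro]: "field_K Ks \<Longrightarrow> c \<in> Ks \<Longrightarrow> vec_in Ks (axis i c)"
  by (auto simp: vec_in_def axis_def)
lemma vec_in_lambda[intro]: "(\<And>i. f i \<in> Ks) \<Longrightarrow> vec_in Ks (\<chi> i. f i)"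
  by (auto simp: vec_in_def)
lemma vec_inD: "vec_in Ks v \<Longrightarrow> v $ i \<in> Ks" by (simp add: vec_in_def)
lemma mat_inD: "mat_in Ks M \<Longrightarrow> M $ i $ j \<in> Ks" by (simp add: mat_in_def)
lemma vec_in_mult[intro]: "field_K Ks \<Longrightarrow> mat_in Ks M \<Longrightarrow> vec_in Ks v \<Longrightarrow> vec_in Ks (M *v v)"
  by (auto simp: vec_in_def matrix_vector_mult_def mat_in_def intro!: Ks_sum Ks_mult)
lemma mat_in_transpose[intro]: "mat_in Ks M \<Longrightarrow> mat_in Ks (transpose M)"
  by (auto simp: mat_in_def transpose_def)
lemma vec_in_column[intro]: "mat_in Ks M \<Longrightarrow> vec_in Ks (column i M)"
  by (auto simp: mat_in_def vec_in_def column_def)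
lemma vec_in_real_scale[intro]: "field_K Ks \<Longrightarrow> vec_in Ks v \<Longrightarrow> vec_in Ks (complex_of_real c *s v)"
  by (auto simp: vec_in_def)

definition vcnj :: "complex^'n \<Rightarrow> complex^'n" where "vcnj v = (\<chi> i. cnj (v$i))"

lemma vcnj_nth[simp]: "vcnj v $ i = cnj (v $ i)" by (simp add: vcnj_def)
lemma norm_vcnj[simp]: "norm (vcnj v) = norm v"
  by (simp add: norm_vec_def)
lemma vec_in_vcnj[intro]: "field_K Ks \<Longrightarrow> vec_in Ks v \<Longrightarrow> vec_in Ks (vcnj v)"
  by (auto simp: vec_in_def)

lemma norm_sq_vec: "(norm (v::complex^'n))\<^sup>2 = (\<Sum>i\<in>UNIV. (cmod (v$i))\<^sup>2)"
  by (simp add: norm_vec_def L2_set_def sum_nonneg)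

lemma norm_sq_vec_c: "complex_of_real ((norm (v::complex^'n))\<^sup>2) = (\<Sum>i\<in>UNIV. v$i * cnj (v$i))"
  unfolding norm_sq_vec of_real_sum
  apply (rule sum.cong, simp)
  subgoal for x using complex_norm_square[of "v$x"] by (simp only: of_real_power)
  done

lemma hinner_self: "hinner v v = complex_of_real ((norm v)\<^sup>2)"
  by (simp only: hinner_def norm_sq_vec_c)

lemma bil_cs: "cmod (\<Sum>i\<in>UNIV. (u::complex^'n)$i * v$i) \<le> norm u * norm v"
proof -
  have "cmod (\<Sum>i\<in>UNIV. u$i * v$i) \<le> (\<Sum>i\<in>UNIV. cmod (u$i) * cmod (v$i))"
    by (rule order_trans[OF norm_sum]) (simp add: norm_mult)
  also have "\<dots> = (\<Sum>i\<in>UNIV. \<bar>cmod (u$i)\<bar> * \<bar>cmod (v$i)\<bar>)" by simp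
  also have "\<dots> \<le> L2_set (\<lambda>i. cmod (u$i)) UNIV * L2_set (\<lambda>i. cmod (v$i)) UNIV"
    by (rule L2_set_mult_ineq)
  finally show ?thesis by (simp add: norm_vec_def)
qed

lemma hinner_cs: "cmod (hinner u v) \<le> norm u * norm v"
proof -
  have "hinner u v = (\<Sum>i\<in>UNIV. u$i * vcnj v $ i)" by (simp add: hinner_def)
  then show ?thesis using bil_cs[of u "vcnj v"] by simp
qed

definition mabs :: "complex^'n^'m \<Rightarrow> real" where
  "mabs M = (\<Sum>i\<in>UNIV. \<Sum>j\<in>UNIV. cmod (M$i$j))"

lemma mabs_nonneg: "mabs M \<ge> 0" by (simp add: mabs_def sum_nonneg)

lemma norm_mv_le: "norm (M *v x) \<le> mabs M * norm x"
proof -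
  have "norm (M *v x) \<le> (\<Sum>i\<in>UNIV. cmod ((M *v x)$i))" unfolding norm_vec_def by (rule L2_set_le_sum) simp
  also have "\<dots> \<le> (\<Sum>i\<in>UNIV. \<Sum>j\<in>UNIV. cmod (M$i$j) * norm x)"
  proof (rule sum_mono)
    fix i
    have "cmod ((M *v x)$i) \<le> (\<Sum>j\<in>UNIV. cmod (M$i$j * x$j))"
      unfolding matrix_vector_mult_def by (simp add: norm_sum)
    also have "\<dots> \<le> (\<Sum>j\<in>UNIV. cmod (M$i$j) * norm x)"
      apply (rule sum_mono) apply (simp add: norm_mult)
      apply (rule mult_left_mono) using Finite_Cartesian_Product.norm_nth_le[of x] by auto
    finally show "cmod ((M *v x)$i) \<le> (\<Sum>j\<in>UNIV. cmod (M$i$j) * norm x)" .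
  qed
  also have "\<dots> = mabs M * norm x" by (simp add: mabs_def sum_distrib_right)
  finally show ?thesis .
qed

definition trilin :: "('i::finite,'j::finite,'k::finite) tensor \<Rightarrow> complex^'i \<Rightarrow> complex^'j \<Rightarrow> complex^'k \<Rightarrow> complex" where
  "trilin M x y z = (\<Sum>i\<in>UNIV. \<Sum>j\<in>UNIV. \<Sum>k\<in>UNIV. M i j k * x$i * y$j * z$k)"

lemma perm4: "(\<Sum>a\<in>A. \<Sum>j\<in>B. \<Sum>k\<in>C. \<Sum>i\<in>D. F a j k i) = (\<Sum>i\<in>D. \<Sum>j\<in>B. \<Sum>k\<in>C. \<Sum>a\<in>A. F a j k i)"
proof -
  have "(\<Sum>a\<in>A. \<Sum>j\<in>B. \<Sum>k\<in>C. \<Sum>i\<in>D. F a j k i) = (\<Sum>a\<in>A. \<Sum>j\<in>B. \<Sum>i\<in>D. \<Sum>k\<in>C. F a j k i)"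
    by (intro sum.cong refl) (rule sum.swap)
  also have "\<dots> = (\<Sum>a\<in>A. \<Sum>i\<in>D. \<Sum>j\<in>B. \<Sum>k\<in>C. F a j k i)"
    by (intro sum.cong refl) (rule sum.swap)
  also have "\<dots> = (\<Sum>i\<in>D. \<Sum>a\<in>A. \<Sum>j\<in>B. \<Sum>k\<in>C. F a j k i)"
    by (rule sum.swap)
  also have "\<dots> = (\<Sum>i\<in>D. \<Sum>j\<in>B. \<Sum>a\<in>A. \<Sum>k\<in>C. F a j k i)"
    by (intro sum.cong refl) (rule sum.swap)
  also have "\<dots> = (\<Sum>i\<in>D. \<Sum>j\<in>B. \<Sum>k\<in>C. \<Sum>a\<in>A. F a j k i)"
    by (intro sum.cong refl) (rule sum.swap)
  finally show ?thesis .
qed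

lemma perm4b: "(\<Sum>i\<in>A. \<Sum>a\<in>B. \<Sum>k\<in>C. \<Sum>j\<in>D. F i a k j) = (\<Sum>i\<in>A. \<Sum>j\<in>D. \<Sum>k\<in>C. \<Sum>a\<in>B. F i a k j)"
proof -
  have "(\<Sum>i\<in>A. \<Sum>a\<in>B. \<Sum>k\<in>C. \<Sum>j\<in>D. F i a k j) = (\<Sum>i\<in>A. \<Sum>a\<in>B. \<Sum>j\<in>D. \<Sum>k\<in>C. F i a k j)"
    by (intro sum.cong refl) (rule sum.swap)
  also have "\<dots> = (\<Sum>i\<in>A. \<Sum>j\<in>D. \<Sum>a\<in>B. \<Sum>k\<in>C. F i a k j)"
    by (intro sum.cong refl) (rule sum.swap)
  also have "\<dots> = (\<Sum>i\<in>A. \<Sum>j\<in>D. \<Sum>k\<in>C. \<Sum>a\<in>B. F i a k j)"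
    by (intro sum.cong refl) (rule sum.swap)
  finally show ?thesis .
qed

lemma trilin_mode1: "trilin (mode1 X M) x y z = trilin X (transpose M *v x) y z"
proof -
  have "trilin (mode1 X M) x y z = (\<Sum>a\<in>UNIV. \<Sum>j\<in>UNIV. \<Sum>k\<in>UNIV. \<Sum>i\<in>UNIV. M$a$i * X i j k * x$a * y$j * z$k)"
    unfolding trilin_def mode1_def by (simp only: sum_distrib_right)
  also have "\<dots> = (\<Sum>i\<in>UNIV. \<Sum>j\<in>UNIV. \<Sum>k\<in>UNIV. \<Sum>a\<in>UNIV. M$a$i * X i j k * x$a * y$j * z$k)"
    by (rule perm4)
  also have "\<dots> = trilin X (transpose M *v x) y z"
    unfolding trilin_def matrix_vector_mult_def transpose_def
    by (simp add: sum_distrib_left sum_distrib_right mult_ac)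
  finally show ?thesis .
qed

lemma trilin_mode2: "trilin (mode2 X M) x y z = trilin X x (transpose M *v y) z"
proof -
  have "trilin (mode2 X M) x y z = (\<Sum>i\<in>UNIV. \<Sum>a\<in>UNIV. \<Sum>k\<in>UNIV. \<Sum>j\<in>UNIV. M$a$j * X i j k * x$i * y$a * z$k)"
    unfolding trilin_def mode2_def by (simp add: sum_distrib_right sum_distrib_left mult_ac)
  also have "\<dots> = (\<Sum>i\<in>UNIV. \<Sum>j\<in>UNIV. \<Sum>k\<in>UNIV. \<Sum>a\<in>UNIV. M$a$j * X i j k * x$i * y$a * z$k)"
    by (rule perm4b)
  also have "\<dots> = trilin X x (transpose M *v y) z"
    unfolding trilin_def matrix_vector_mult_def transpose_def
    by (simp add: sum_distrib_left sum_distrib_right mult_ac)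
  finally show ?thesis .
qed

lemma trilin_mode3: "trilin (mode3 X M) x y z = trilin X x y (transpose M *v z)"
proof -
  have "trilin (mode3 X M) x y z = (\<Sum>i\<in>UNIV. \<Sum>j\<in>UNIV. \<Sum>a\<in>UNIV. \<Sum>k\<in>UNIV. M$a$k * X i j k * x$i * y$j * z$a)"
    unfolding trilin_def mode3_def by (simp add: sum_distrib_right sum_distrib_left mult_ac)
  also have "\<dots> = (\<Sum>i\<in>UNIV. \<Sum>j\<in>UNIV. \<Sum>k\<in>UNIV. \<Sum>a\<in>UNIV. M$a$k * X i j k * x$i * y$j * z$a)"
    by (intro sum.cong refl) (rule sum.swap)
  also have "\<dots> = trilin X x y (transpose M *v z)"
    unfolding trilin_def matrix_vector_mult_def transpose_def
    by (simp add: sum_distrib_left sum_distrib_right mult_ac)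
  finally show ?thesis .
qed

lemma norm_vsmult: "norm ((c::complex) *s (v::complex^'n)) = cmod c * norm v"
proof -
  have "(norm (c *s v))\<^sup>2 = (cmod c * norm v)\<^sup>2"
    by (simp add: norm_sq_vec power_mult_distrib norm_mult sum_distrib_left)
  then show ?thesis by (simp add: power2_eq_iff_nonneg)
qed

lemma norm_axis_c[simp]: "norm (axis m (c::complex)) = cmod c"
proof -
  have "axis m c = c *s axis m 1" by (simp add: axis_def vec_eq_iff)
  moreover have "norm (axis m (1::complex)) = 1"
  proof -
    have "\<And>i. (norm (axis m (1::complex) $ i))\<^sup>2 = (if i = m then 1 else 0)" by (simp add: axis_def)
    then have "(norm (axis m (1::complex)))\<^sup>2 = 1" by (simp add: norm_sq_vec)
    then show ?thesis by (simp add: power2_eq_1_iff)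
  qed
  ultimately show ?thesis by (simp add: norm_vsmult)
qed

definition tabs :: "('i::finite,'j::finite,'k::finite) tensor \<Rightarrow> real" where
  "tabs M = (\<Sum>i\<in>UNIV. \<Sum>j\<in>UNIV. \<Sum>k\<in>UNIV. cmod (M i j k))"

lemma trilin_bound: "cmod (trilin M x y z) \<le> tabs M * norm x * norm y * norm z"
proof -
  have "cmod (trilin M x y z) \<le> (\<Sum>i\<in>UNIV. \<Sum>j\<in>UNIV. \<Sum>k\<in>UNIV. cmod (M i j k * x$i * y$j * z$k))"
    unfolding trilin_def
    by (rule order_trans[OF norm_sum], rule sum_mono, rule order_trans[OF norm_sum], rule sum_mono, rule norm_sum)
  also have "\<dots> \<le> (\<Sum>i\<in>UNIV. \<Sum>j\<in>UNIV. \<Sum>k\<in>UNIV. cmod (M i j k) * norm x * norm y * norm z)"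
    apply (intro sum_mono)
    apply (simp add: norm_mult)
    apply (intro mult_mono mult_left_mono Finite_Cartesian_Product.norm_nth_le)
    apply (auto intro: mult_nonneg_nonneg)
    done
  also have "\<dots> = tabs M * norm x * norm y * norm z"
    by (simp add: tabs_def sum_distrib_right)
  finally show ?thesis .
qed

lemma trilin_scale1: "trilin M (a *s x) y z = a * trilin M x y z"
  by (simp add: trilin_def sum_distrib_left mult_ac)
lemma trilin_scale2: "trilin M x (a *s y) z = a * trilin M x y z"
  by (simp add: trilin_def sum_distrib_left mult_ac)
lemma trilin_scale3: "trilin M x y (a *s z) = a * trilin M x y z"
  by (simp add: trilin_def sum_distrib_left mult_ac)

lemma sp_norm_alt: "sp_norm Ks M = Sup {cmod (trilin M x y z) | x y z.
       vec_in Ks x \<and> vec_in Ks y \<and> vec_in Ks z \<and> norm x = 1 \<and> norm y = 1 \<and> norm z = 1}"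
  by (simp add: sp_norm_def trilin_def)

lemma sp_set_bdd: "bdd_above {cmod (trilin M x y z) | x y z.
       vec_in Ks x \<and> vec_in Ks y \<and> vec_in Ks z \<and> norm x = 1 \<and> norm y = 1 \<and> norm z = 1}"
  apply (rule bdd_aboveI[of _ "tabs M"])
  using trilin_bound[of M] by (smt (verit, best) mem_Collect_eq mult_cancel_left1)

lemma sp_set_ne: "field_K Ks \<Longrightarrow> {cmod (trilin (M::('i::finite,'j::finite,'k::finite) tensor) x y z) | x y z.
       vec_in Ks x \<and> vec_in Ks y \<and> vec_in Ks z \<and> norm x = 1 \<and> norm y = 1 \<and> norm z = 1} \<noteq> {}"
proof -
  assume K: "field_K Ks"
  let ?x = "axis undefined 1 :: complex^'i"
  let ?y = "axis undefined 1 :: complex^'j"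
  let ?z = "axis undefined 1 :: complex^'k"
  have "cmod (trilin M ?x ?y ?z) \<in> {cmod (trilin M x y z) | x y z.
       vec_in Ks x \<and> vec_in Ks y \<and> vec_in Ks z \<and> norm x = 1 \<and> norm y = 1 \<and> norm z = 1}"
    using K by (intro CollectI exI[of _ ?x] exI[of _ ?y] exI[of _ ?z]) auto
  then show ?thesis by blast
qed

lemma sp_upper: "vec_in Ks x \<Longrightarrow> vec_in Ks y \<Longrightarrow> vec_in Ks z \<Longrightarrow> norm x = 1 \<Longrightarrow> norm y = 1 \<Longrightarrow> norm z = 1
  \<Longrightarrow> cmod (trilin M x y z) \<le> sp_norm Ks M"
  unfolding sp_norm_alt by (rule cSup_upper[OF _ sp_set_bdd]) blast

lemma sp_nonneg: "field_K Ks \<Longrightarrow> 0 \<le> sp_norm Ks (M::('i::finite,'j::finite,'k::finite) tensor)"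
proof -
  assume K: "field_K Ks"
  let ?x = "axis undefined 1 :: complex^'i"
  let ?y = "axis undefined 1 :: complex^'j"
  let ?z = "axis undefined 1 :: complex^'k"
  have "cmod (trilin M ?x ?y ?z) \<le> sp_norm Ks M"
    by (rule sp_upper) (use K in auto)
  then show ?thesis by (rule order_trans[rotated]) simp
qed

lemma sp_least: "field_K Ks \<Longrightarrow> (\<And>x y z. vec_in Ks x \<Longrightarrow> vec_in Ks y \<Longrightarrow> vec_in Ks z \<Longrightarrow> norm x = 1 \<Longrightarrow> norm y = 1 \<Longrightarrow> norm z = 1
  \<Longrightarrow> cmod (trilin M x y z) \<le> c) \<Longrightarrow> sp_norm Ks (M::('i::finite,'j::finite,'k::finite) tensor) \<le> c"
  unfolding sp_norm_alt by (rule cSup_least[OF sp_set_ne]) auto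

lemma trilin_zero1[simp]: "trilin M 0 y z = 0" by (simp add: trilin_def)
lemma trilin_zero2[simp]: "trilin M x 0 z = 0" by (simp add: trilin_def)
lemma trilin_zero3[simp]: "trilin M x y 0 = 0" by (simp add: trilin_def)

lemma normalize_vec: "(x::complex^'n) \<noteq> 0 \<Longrightarrow> x = complex_of_real (norm x) *s (complex_of_real (1 / norm x) *s x) \<and> norm (complex_of_real (1 / norm x) *s x) = 1"
  by (simp add: vector_smult_assoc norm_vsmult norm_divide)

lemma sp_bound: assumes K: "field_K Ks" and "vec_in Ks x" "vec_in Ks y" "vec_in Ks z"
  shows "cmod (trilin M x y z) \<le> sp_norm Ks M * norm x * norm y * norm z"
proof (cases "x = 0 \<or> y = 0 \<or> z = 0")
  case True
  then show ?thesis using sp_nonneg[OF K, of M] by auto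
next
  case False
  let ?x = "complex_of_real (1 / norm x) *s x"
  let ?y = "complex_of_real (1 / norm y) *s y"
  let ?z = "complex_of_real (1 / norm z) *s z"
  have ex: "x = complex_of_real (norm x) *s ?x" "y = complex_of_real (norm y) *s ?y" "z = complex_of_real (norm z) *s ?z"
    and n: "norm ?x = 1" "norm ?y = 1" "norm ?z = 1"
    using normalize_vec False by blast+
  have "trilin M x y z = complex_of_real (norm x) * complex_of_real (norm y) * complex_of_real (norm z) * trilin M ?x ?y ?z"
    apply (subst ex(1), subst ex(2), subst ex(3))
    by (simp add: trilin_scale1 trilin_scale2 trilin_scale3)
  then have "cmod (trilin M x y z) = norm x * norm y * norm z * cmod (trilin M ?x ?y ?z)"
    by (simp add: norm_mult)
  also have "\<dots> \<le> norm x * norm y * norm z * sp_norm Ks M"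
    apply (rule mult_left_mono)
     apply (rule sp_upper) using assms n by (auto intro!: vec_in_scale Ks_divide)
  finally show ?thesis by (simp add: mult_ac)
qed

lemma minv: assumes "invertible A" shows "A ** matrix_inv A = mat 1" "matrix_inv A ** A = mat 1"
proof -
  have "\<exists>A'. A ** A' = mat 1 \<and> A' ** A = mat 1" using assms by (simp add: invertible_def)
  then have "A ** matrix_inv A = mat 1 \<and> matrix_inv A ** A = mat 1"
    unfolding matrix_inv_def by (rule someI_ex)
  then show "A ** matrix_inv A = mat 1" "matrix_inv A ** A = mat 1" by auto
qed

lemma minv_vec: assumes "invertible A"
  shows "A *v (matrix_inv A *v x) = x" "matrix_inv A *v (A *v x) = x"
  by (simp_all add: matrix_vector_mul_assoc minv[OF assms])

lemma mv_axis: "(M *v axis j 1) $ i = M $ i $ j"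
  by (simp add: matrix_vector_mult_def axis_def if_distrib cong: if_cong)

lemma Ks_of_int[simp]: "field_K Ks \<Longrightarrow> (of_int n :: complex) \<in> Ks"
  by (auto simp: field_K_def)

lemma det_in_Ks: "field_K Ks \<Longrightarrow> mat_in Ks M \<Longrightarrow> det M \<in> Ks"
  unfolding det_def by (auto intro!: Ks_sum Ks_mult Ks_prod simp: mat_inD)

lemma minv_in: fixes A :: "complex^'n^'n" assumes K: "field_K Ks" and M: "mat_in Ks A" and inv: "invertible A"
  shows "mat_in Ks (matrix_inv A)"
proof -
  have d0: "det A \<noteq> 0" using inv invertible_det_nz by blast
  show ?thesis unfolding mat_in_def
  proof (intro allI)
    fix i j
    have "A *v (matrix_inv A *v axis j 1) = axis j 1" by (rule minv_vec[OF inv])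
    then have "matrix_inv A *v axis j 1 = (\<chi> k. det(\<chi> i l. if l=k then axis j 1$i else A$i$l) / det A)"
      using cramer[OF d0] by blast
    then have "(matrix_inv A *v axis j 1) $ i = det(\<chi> i' l. if l=i then axis j 1$i' else A$i'$l) / det A"
      by simp
    then have "matrix_inv A $ i $ j = det(\<chi> i' l. if l=i then axis j 1$i' else A$i'$l) / det A"
      by (simp only: mv_axis)
    also have "\<dots> \<in> Ks"
      apply (rule Ks_divide[OF K])
       apply (rule det_in_Ks[OF K]) using M K apply (auto simp: mat_in_def axis_def)[1]
      by (rule det_in_Ks[OF K M])
    finally show "matrix_inv A $ i $ j \<in> Ks" .
  qed
qed

lemma sigma_lower: assumes "norm x = 1" shows "sigma_min A \<le> norm (A *v x)"
  unfolding sigma_min_def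
  apply (rule cInf_lower)
  using assms apply blast
  by (rule bdd_belowI[of _ 0]) auto

lemma sigma_pos: assumes inv: "invertible A" shows "sigma_min A > 0"
proof -
  let ?c = "mabs (matrix_inv A)"
  have key: "1 \<le> ?c * norm (A *v x)" if "norm x = 1" for x
  proof -
    have "norm x = norm (matrix_inv A *v (A *v x))" by (simp add: minv_vec[OF inv])
    also have "\<dots> \<le> ?c * norm (A *v x)" by (rule norm_mv_le)
    finally show ?thesis using that by simp
  qed
  have "norm (A *v axis undefined 1) \<in> {norm (A *v x) |x. norm x = 1}"
    by (intro CollectI exI[of _ "axis undefined (1::complex)"]) simp
  then have ne: "{norm (A *v x) |x. norm x = 1} \<noteq> {}" by blast
  define x0 :: "complex^'a" where "x0 = axis undefined 1"
  have x0: "norm x0 = 1" by (simp add: x0_def)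
  have cpos: "?c > 0"
  proof -
    have "1 \<le> ?c * norm (A *v x0)" using key x0 .
    moreover have "?c \<noteq> 0" using calculation by auto
    ultimately show ?thesis using mabs_nonneg[of "matrix_inv A"] by linarith
  qed
  have "1 / ?c \<le> sigma_min A"
    unfolding sigma_min_def
  proof (rule cInf_greatest[OF ne])
    fix y assume "y \<in> {norm (A *v x) |x. norm x = 1}"
    then obtain x where "norm x = 1" "y = norm (A *v x)" by blast
    then show "1 / ?c \<le> y" using key cpos by (simp add: divide_le_eq mult.commute)
  qed
  moreover have "0 < 1 / ?c" using cpos by simp
  ultimately show ?thesis by linarith
qed

lemma mv_scale: "(M::complex^'n^'m) *v (c *s v) = c *s (M *v v)"
  unfolding matrix_vector_mult_def vec_eq_iff
  apply (simp add: sum_distrib_left) apply (intro allI sum.cong refl) by (simp add: mult.left_commute)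

lemma sigma_scaled: "sigma_min A * norm x \<le> norm (A *v x)"
proof (cases "x = 0")
  case True then show ?thesis by simp
next
  case False
  let ?u = "complex_of_real (1 / norm x) *s x"
  have e: "x = complex_of_real (norm x) *s ?u" "norm ?u = 1" using normalize_vec[OF False] by blast+
  have "A *v x = complex_of_real (norm x) *s (A *v ?u)"
    by (subst arg_cong[where f="(*v) A", OF e(1)]) (rule mv_scale)
  then have "norm (A *v x) = norm x * norm (A *v ?u)" by (simp add: norm_vsmult)
  moreover have "sigma_min A \<le> norm (A *v ?u)" by (rule sigma_lower[OF e(2)])
  ultimately show ?thesis using mult_right_mono[of "sigma_min A" "norm (A *v ?u)" "norm x"] by (simp add: mult.commute)
qed

lemma minv_bound: assumes inv: "invertible A"
  shows "norm (matrix_inv A *v u) \<le> norm u / sigma_min A"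
proof -
  have "sigma_min A * norm (matrix_inv A *v u) \<le> norm (A *v (matrix_inv A *v u))" by (rule sigma_scaled)
  then have "sigma_min A * norm (matrix_inv A *v u) \<le> norm u" by (simp add: minv_vec[OF inv])
  then show ?thesis using sigma_pos[OF inv] by (simp add: le_divide_eq mult.commute)
qed

lemma transpose_bound: assumes b: "\<And>v. norm (N *v v) \<le> c * norm v" and c: "c \<ge> 0"
  shows "norm (transpose N *v u) \<le> c * norm (u::complex^'n)"
proof -
  define t where "t = transpose N *v u"
  have "complex_of_real ((norm t)\<^sup>2) = (\<Sum>i\<in>UNIV. t$i * cnj (t$i))" by (rule norm_sq_vec_c)
  also have "\<dots> = (\<Sum>i\<in>UNIV. \<Sum>j\<in>UNIV. N$j$i * u$j * cnj (t$i))"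
    by (simp add: t_def matrix_vector_mult_def transpose_def sum_distrib_right del: transpose_matrix_vector)
  also have "\<dots> = (\<Sum>j\<in>UNIV. \<Sum>i\<in>UNIV. N$j$i * u$j * cnj (t$i))" by (rule sum.swap)
  also have "\<dots> = (\<Sum>j\<in>UNIV. u$j * (N *v vcnj t)$j)"
    by (simp add: matrix_vector_mult_def sum_distrib_left mult_ac)
  finally have e: "complex_of_real ((norm t)\<^sup>2) = (\<Sum>j\<in>UNIV. u$j * (N *v vcnj t)$j)" .
  have "(norm t)\<^sup>2 = cmod (complex_of_real ((norm t)\<^sup>2))" by (subst norm_of_real) simp
  also have "\<dots> \<le> norm u * norm (N *v vcnj t)" unfolding e by (rule bil_cs)
  also have "\<dots> \<le> norm u * (c * norm t)" using b[of "vcnj t"] by (simp add: mult_left_mono)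
  finally have "norm t * norm t \<le> norm t * (c * norm u)" by (simp add: power2_eq_square mult_ac)
  then have "norm t \<le> c * norm u"
  proof (cases "norm t = 0")
    case True then show ?thesis using c by simp
  next
    case False then have "norm t > 0" by simp
    then show ?thesis using \<open>norm t * norm t \<le> norm t * (c * norm u)\<close> mult_le_cancel_left_pos by blast
  qed
  then show ?thesis unfolding t_def .
qed

lemma minvT_bound: assumes inv: "invertible A"
  shows "norm (transpose (matrix_inv A) *v u) \<le> norm u / sigma_min A"
proof -
  have "norm (transpose (matrix_inv A) *v u) \<le> (1 / sigma_min A) * norm u"
  proof (rule transpose_bound)
    fix v
    show "norm (matrix_inv A *v v) \<le> 1 / sigma_min A * norm v"
      using minv_bound[OF inv, of v] by simp
    show "0 \<le> 1 / sigma_min A" using sigma_pos[OF inv] by simp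
  qed
  then show ?thesis by simp
qed

lemma hinner_diff_left: "hinner (u - v) w = hinner u w - hinner v w"
  by (simp add: hinner_def sum_subtractf algebra_simps)
lemma hinner_diff_right: "hinner u (v - w) = hinner u v - hinner u w"
  by (simp add: hinner_def sum_subtractf algebra_simps)
lemma hinner_scale_left: "hinner (a *s u) v = a * hinner u v"
  by (simp add: hinner_def sum_distrib_left mult_ac)
lemma hinner_scale_right: "hinner u (a *s v) = cnj a * hinner u v"
  by (simp add: hinner_def sum_distrib_left mult_ac)
lemma hinner_swap: "hinner v u = cnj (hinner u v)"
  by (simp add: hinner_def mult.commute)

lemma proj_norm_sq:
  assumes v0: "v \<noteq> 0"
  shows "(norm (z - (hinner z v / complex_of_real ((norm v)\<^sup>2)) *s v))\<^sup>2 = (norm z)\<^sup>2 - (cmod (hinner z v))\<^sup>2 / (norm v)\<^sup>2"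
proof -
  define n where "n = (norm v)\<^sup>2"
  define h where "h = hinner z v"
  have n0: "n \<noteq> 0" using v0 by (simp add: n_def)
  have hv: "hinner v v = complex_of_real n" by (simp add: n_def hinner_self)
  have hz: "hinner z z = complex_of_real ((norm z)\<^sup>2)" by (simp add: hinner_self)
  have hh: "h * cnj h = complex_of_real ((cmod h)\<^sup>2)" by (rule complex_norm_square[symmetric])
  have "complex_of_real ((norm (z - (h / complex_of_real n) *s v))\<^sup>2)
      = hinner (z - (h / complex_of_real n) *s v) (z - (h / complex_of_real n) *s v)"
    by (simp add: hinner_self)
  also have "\<dots> = hinner z z - cnj (h / complex_of_real n) * h - (h / complex_of_real n) * cnj h
      + (h / complex_of_real n) * cnj (h / complex_of_real n) * hinner v v"
    by (simp add: hinner_diff_left hinner_diff_right hinner_scale_left hinner_scale_right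
        hinner_swap[of v z] h_def algebra_simps)
  also have "\<dots> = complex_of_real ((norm z)\<^sup>2) - h * cnj h / complex_of_real n"
    unfolding hv hz using n0 by (simp add: field_simps power2_eq_square)
  also have "\<dots> = complex_of_real ((norm z)\<^sup>2 - (cmod h)\<^sup>2 / n)"
    unfolding hh by simp
  finally show ?thesis unfolding n_def h_def of_real_eq_iff .
qed

lemma proj_le: "norm (z - (hinner z v / complex_of_real ((norm v)\<^sup>2)) *s v) \<le> norm z"
proof (cases "v = 0")
  case True then show ?thesis by simp
next
  case False
  have "(norm (z - (hinner z v / complex_of_real ((norm v)\<^sup>2)) *s v))\<^sup>2 \<le> (norm z)\<^sup>2"
    unfolding proj_norm_sq[OF False] by simp
  then show ?thesis by (simp add: power2_le_iff_abs_le)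
qed

lemma delta_sum: "(\<Sum>j\<in>UNIV. (if i = j then 1 else 0) * (g j::complex)) = g (i::'n::finite)"
proof -
  have "(\<Sum>j\<in>UNIV. (if i = j then 1 else 0) * g j) = (\<Sum>j\<in>UNIV. if i = j then g j else 0)"
    by (rule sum.cong) auto
  then show ?thesis by simp
qed

lemma delta_sum': "(\<Sum>j\<in>UNIV. ((if i = j then 1 else 0) - f j) * (g j::complex)) = g (i::'n::finite) - (\<Sum>j\<in>UNIV. f j * g j)"
  by (simp add: left_diff_distrib sum_subtractf delta_sum)

lemma delta_sumR: "(\<Sum>j\<in>UNIV. (g j::complex) * ((if i = j then 1 else 0) - f j)) = g (i::'n::finite) - (\<Sum>j\<in>UNIV. g j * f j)"
proof -
  have "(\<Sum>j\<in>UNIV. g j * (if i = j then 1 else 0)) = (\<Sum>j\<in>UNIV. if i = j then g j else 0)"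
    by (rule sum.cong) auto
  then show ?thesis by (simp add: right_diff_distrib sum_subtractf)
qed

lemma sum_rearr: "(\<Sum>j\<in>UNIV. (a * b j / n) * (d j::complex)) = (\<Sum>j\<in>UNIV. d j * b j) / n * a"
proof -
  have "(\<Sum>j\<in>UNIV. d j * b j) / n * a = (\<Sum>j\<in>UNIV. d j * b j / n * a)"
    by (simp only: sum_divide_distrib sum_distrib_right)
  also have "\<dots> = (\<Sum>j\<in>UNIV. (a * b j / n) * d j)"
    by (rule sum.cong) (auto simp: field_simps)
  finally show ?thesis by simp
qed

lemma proj_apply: "proj_perp Ks L *v c = c - (hinner c (line_rep Ks L) / complex_of_real ((norm (line_rep Ks L))\<^sup>2)) *s line_rep Ks L"
proof -
  define w where "w = line_rep Ks L"
  define n where "n = complex_of_real ((norm w)\<^sup>2)"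
  have "(proj_perp Ks L *v c) $ i = (c - (hinner c w / n) *s w) $ i" for i
  proof -
    have "(proj_perp Ks L *v c) $ i = (\<Sum>j\<in>UNIV. ((if i = j then 1 else 0) - w$i * cnj (w$j) / n) * c$j)"
      by (simp only: proj_perp_def Let_def w_def n_def matrix_vector_mult_def vec_lambda_beta)
    also have "\<dots> = c$i - (\<Sum>j\<in>UNIV. (w$i * cnj (w$j) / n) * c$j)" by (rule delta_sum')
    also have "\<dots> = c$i - (\<Sum>j\<in>UNIV. c$j * cnj (w$j)) / n * w$i" by (simp only: sum_rearr)
    also have "\<dots> = (c - (hinner c w / n) *s w) $ i" by (simp add: hinner_def)
    finally show ?thesis .
  qed
  then show ?thesis by (simp add: vec_eq_iff w_def n_def)
qed

lemma projT_apply: "transpose (proj_perp Ks L) *v c = c - (hinner c (vcnj (line_rep Ks L)) / complex_of_real ((norm (vcnj (line_rep Ks L)))\<^sup>2)) *s vcnj (line_rep Ks L)"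
proof -
  define w where "w = line_rep Ks L"
  define n where "n = complex_of_real ((norm w)\<^sup>2)"
  have e: "\<And>i j. (i = j) = (j = i)" by auto
  have "(transpose (proj_perp Ks L) *v c) $ i = (c - (hinner c (vcnj w) / n) *s vcnj w) $ i" for i
  proof -
    have "(transpose (proj_perp Ks L) *v c) $ i = (\<Sum>j\<in>UNIV. ((if i = j then 1 else 0) - cnj (w$i) * w$j / n) * c$j)"
      apply (simp only: proj_perp_def Let_def w_def n_def matrix_vector_mult_def transpose_def vec_lambda_beta)
      apply (rule sum.cong, rule refl) by (auto simp: mult.commute)
    also have "\<dots> = c$i - (\<Sum>j\<in>UNIV. (cnj (w$i) * w$j / n) * c$j)" by (rule delta_sum')
    also have "\<dots> = c$i - (\<Sum>j\<in>UNIV. c$j * w$j) / n * cnj (w$i)" by (simp only: sum_rearr)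
    also have "\<dots> = (c - (hinner c (vcnj w) / n) *s vcnj w) $ i" by (simp add: hinner_def)
    finally show ?thesis .
  qed
  then show ?thesis by (simp add: vec_eq_iff w_def n_def del: transpose_matrix_vector)
qed

lemma projT_le: "norm (transpose (proj_perp Ks L) *v z) \<le> norm z"
  unfolding projT_apply by (rule proj_le)

lemma kspan_scale: assumes K: "field_K Ks" and t: "t \<in> Ks" "t \<noteq> 0"
  shows "kspan Ks (t *s u) = kspan Ks u"
proof
  show "kspan Ks (t *s u) \<subseteq> kspan Ks u"
  proof
    fix x assume "x \<in> kspan Ks (t *s u)"
    then obtain c where c: "c \<in> Ks" "x = c *s (t *s u)" by (auto simp: kspan_def)
    then have "x = (c * t) *s u" by (simp add: vector_smult_assoc)
    moreover have "c * t \<in> Ks" using K c t by auto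
    ultimately show "x \<in> kspan Ks u" unfolding kspan_def by blast
  qed
  show "kspan Ks u \<subseteq> kspan Ks (t *s u)"
  proof
    fix x assume "x \<in> kspan Ks u"
    then obtain c where c: "c \<in> Ks" "x = c *s u" by (auto simp: kspan_def)
    then have "x = (c / t) *s (t *s u)" using t by (simp add: vector_smult_assoc)
    moreover have "c / t \<in> Ks" using K c t by auto
    ultimately show "x \<in> kspan Ks (t *s u)" unfolding kspan_def by blast
  qed
qed

lemma line_rep_kspan: assumes K: "field_K Ks" and u: "u \<noteq> 0"
  shows "\<exists>t. t \<in> Ks \<and> t \<noteq> 0 \<and> line_rep Ks (kspan Ks u) = t *s u"
proof -
  let ?P = "\<lambda>v. v \<noteq> 0 \<and> kspan Ks u = kspan Ks v"
  have "?P u" using u by simp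
  then have P: "?P (line_rep Ks (kspan Ks u))" unfolding line_rep_def by (rule someI)
  define v where "v = line_rep Ks (kspan Ks u)"
  have "v \<in> kspan Ks v" unfolding kspan_def using K by (auto intro!: exI[of _ 1])
  then have "v \<in> kspan Ks u" using P v_def by simp
  then obtain t where t: "t \<in> Ks" "v = t *s u" by (auto simp: kspan_def)
  moreover have "t \<noteq> 0" using t P v_def by auto
  ultimately show ?thesis unfolding v_def by blast
qed

lemma Ks_power[intro]: "field_K Ks \<Longrightarrow> a \<in> Ks \<Longrightarrow> a ^ n \<in> Ks" by (auto simp: field_K_def)

lemma vec_in_vmult[intro]: "field_K Ks \<Longrightarrow> mat_in Ks M \<Longrightarrow> vec_in Ks v \<Longrightarrow> vec_in Ks (v v* M)"
  by (auto simp: vec_in_def vector_matrix_mult_def mat_in_def intro!: Ks_sum Ks_mult)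

lemma line_rep_ne: assumes K: "field_K Ks" and u: "u \<noteq> 0"
  shows "line_rep Ks (kspan Ks u) \<noteq> 0"
proof -
  let ?P = "\<lambda>v. v \<noteq> 0 \<and> kspan Ks u = kspan Ks v"
  have "?P u" using u by simp
  then have P: "?P (line_rep Ks (kspan Ks u))" unfolding line_rep_def by (rule someI)
  then show ?thesis by simp
qed

lemma norm_scale_vec_pos: "t \<noteq> 0 \<Longrightarrow> u \<noteq> 0 \<Longrightarrow> norm ((t::complex) *s (u::complex^'n)) \<noteq> 0"
  by (simp add: norm_vsmult)

lemma chordal_vec_scale: assumes "s \<noteq> 0" "t \<noteq> 0"
  shows "chordal_vec (s *s u) (t *s v) = chordal_vec u v"
proof -
  have "(cmod (hinner (s *s u) (t *s v)))\<^sup>2 / ((norm (s *s u))\<^sup>2 * (norm (t *s v))\<^sup>2)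
      = ((cmod s)\<^sup>2 * (cmod t)\<^sup>2 * (cmod (hinner u v))\<^sup>2) / (((cmod s)\<^sup>2 * (cmod t)\<^sup>2) * ((norm u)\<^sup>2 * (norm v)\<^sup>2))"
    by (simp add: hinner_scale_left hinner_scale_right norm_vsmult norm_mult power_mult_distrib mult_ac)
  also have "\<dots> = (cmod (hinner u v))\<^sup>2 / ((norm u)\<^sup>2 * (norm v)\<^sup>2)"
    using assms by simp
  finally show ?thesis by (simp add: chordal_vec_def)
qed

lemma proj_kill: assumes K: "field_K Ks" and lam: "lam \<noteq> 0"
  shows "proj_perp Ks (kspan Ks lam) *v (a *s lam) = 0"
proof -
  obtain t where t: "t \<in> Ks" "t \<noteq> 0" "line_rep Ks (kspan Ks lam) = t *s lam"
    using line_rep_kspan[OF K lam] by blast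
  define w where "w = line_rep Ks (kspan Ks lam)"
  have w0: "w \<noteq> 0" using t lam by (simp add: w_def)
  have e: "a *s lam = (a / t) *s w" using t by (simp add: w_def vector_smult_assoc)
  have "proj_perp Ks (kspan Ks lam) *v w = w - (hinner w w / complex_of_real ((norm w)\<^sup>2)) *s w"
    unfolding proj_apply w_def ..
  also have "\<dots> = 0" using w0 by (simp add: hinner_self)
  finally show ?thesis unfolding e mv_scale by simp
qed

lemma chordal_proj: assumes K: "field_K Ks" and c: "norm c = 1" and lam: "lam \<noteq> 0"
  shows "chordal Ks (kspan Ks c) (kspan Ks lam) = norm (proj_perp Ks (kspan Ks lam) *v c)"
proof -
  have c0: "c \<noteq> 0" using c by auto
  obtain s where s: "s \<in> Ks" "s \<noteq> 0" "line_rep Ks (kspan Ks c) = s *s c"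
    using line_rep_kspan[OF K c0] by blast
  define w where "w = line_rep Ks (kspan Ks lam)"
  have w0: "w \<noteq> 0" using line_rep_ne[OF K lam] by (simp add: w_def)
  have "chordal Ks (kspan Ks c) (kspan Ks lam) = chordal_vec (s *s c) (1 *s w)"
    by (simp add: chordal_def s w_def)
  also have "\<dots> = chordal_vec c w" by (rule chordal_vec_scale) (use s in auto)
  also have "\<dots> = sqrt ((norm (proj_perp Ks (kspan Ks lam) *v c))\<^sup>2)"
    unfolding chordal_vec_def proj_apply w_def[symmetric] proj_norm_sq[OF w0] c by simp
  also have "\<dots> = norm (proj_perp Ks (kspan Ks lam) *v c)" by simp
  finally show ?thesis .
qed

lemma proj_in: assumes K: "field_K Ks" and lam: "lam \<noteq> 0" "vec_in Ks lam"
  shows "mat_in Ks (proj_perp Ks (kspan Ks lam))"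
proof -
  obtain t where t: "t \<in> Ks" "t \<noteq> 0" "line_rep Ks (kspan Ks lam) = t *s lam"
    using line_rep_kspan[OF K lam(1)] by blast
  have w: "vec_in Ks (line_rep Ks (kspan Ks lam))" using t lam K by auto
  show ?thesis unfolding proj_perp_def Let_def mat_in_def
    using w K by (auto intro!: Ks_diff Ks_divide Ks_mult Ks_cnj Ks_uminus Ks_power simp: vec_inD)
qed

lemma mode3_id: "mode3 X (mat 1) = X"
  by (simp add: mode3_def mat_def delta_sum)

lemma upper_modes:
  fixes X :: "('i::finite,'j::finite,'k::finite) tensor" and M1 :: "complex^'i^'a::finite"
    and M2 :: "complex^'j^'b::finite" and M3 :: "complex^'k^'c::finite"
  assumes K: "field_K Ks" and M: "mat_in Ks M1" "mat_in Ks M2" "mat_in Ks M3"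
    and c: "c1 \<ge> 0" "c2 \<ge> 0" "c3 \<ge> 0"
    and b1: "\<And>u. norm (transpose M1 *v u) \<le> c1 * norm u"
    and b2: "\<And>u. norm (transpose M2 *v u) \<le> c2 * norm u"
    and b3: "\<And>u. norm (transpose M3 *v u) \<le> c3 * norm u"
  shows "sp_norm Ks (mode3 (mode2 (mode1 X M1) M2) M3) \<le> sp_norm Ks X * c1 * c2 * c3"
proof (rule sp_least[OF K])
  fix x :: "complex^'a" and y :: "complex^'b" and z :: "complex^'c" assume xyz: "vec_in Ks x" "vec_in Ks y" "vec_in Ks z" "norm x = 1" "norm y = 1" "norm z = 1"
  have "cmod (trilin (mode3 (mode2 (mode1 X M1) M2) M3) x y z)
     = cmod (trilin X (transpose M1 *v x) (transpose M2 *v y) (transpose M3 *v z))"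
    by (simp only: trilin_mode1 trilin_mode2 trilin_mode3)
  also have "\<dots> \<le> sp_norm Ks X * norm (transpose M1 *v x) * norm (transpose M2 *v y) * norm (transpose M3 *v z)"
    by (rule sp_bound[OF K]) (use xyz M K in auto)
  also have "\<dots> \<le> sp_norm Ks X * c1 * c2 * c3"
    using b1[of x] b2[of y] b3[of z] xyz sp_nonneg[OF K, of X] c
    by (auto intro!: mult_mono mult_nonneg_nonneg)
  finally show "cmod (trilin (mode3 (mode2 (mode1 X M1) M2) M3) x y z) \<le> sp_norm Ks X * c1 * c2 * c3" .
qed

definition bdot :: "complex^'n \<Rightarrow> complex^'n \<Rightarrow> complex" where
  "bdot u v = (\<Sum>i\<in>UNIV. u$i * v$i)"

lemma bdot_diff: "bdot a (u - v) = bdot a u - bdot a v"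
  by (simp add: bdot_def algebra_simps sum_subtractf)
lemma bdot_scale: "bdot a (c *s u) = c * bdot a u"
  by (simp add: bdot_def sum_distrib_left mult_ac)
lemma bdot_zero[simp]: "bdot a 0 = 0"
  by (simp add: bdot_def)

lemma bdot_transpose: "bdot (transpose M *v a) b = bdot a (M *v b)"
proof -
  have "bdot (transpose M *v a) b = (\<Sum>i\<in>UNIV. \<Sum>j\<in>UNIV. M$j$i * a$j * b$i)"
    by (simp add: bdot_def matrix_vector_mult_def transpose_def sum_distrib_right del: transpose_matrix_vector)
  also have "\<dots> = (\<Sum>j\<in>UNIV. \<Sum>i\<in>UNIV. M$j$i * a$j * b$i)" by (rule sum.swap)
  also have "\<dots> = bdot a (M *v b)"
    by (simp add: bdot_def matrix_vector_mult_def sum_distrib_left mult_ac)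
  finally show ?thesis .
qed

lemma bdot_vcnj_self: "bdot (vcnj u) u = complex_of_real ((norm u)\<^sup>2)"
proof -
  have "bdot (vcnj u) u = (\<Sum>i\<in>UNIV. u$i * cnj (u$i))" by (simp add: bdot_def mult.commute)
  also have "\<dots> = complex_of_real ((norm u)\<^sup>2)" by (rule norm_sq_vec_c[symmetric])
  finally show ?thesis .
qed

lemma trilin_slices: "trilin X a b c = (\<Sum>l\<in>UNIV. c$l * bdot a (slice X l *v b))"
proof -
  have "trilin X a b c = (\<Sum>i\<in>UNIV. \<Sum>l\<in>UNIV. \<Sum>j\<in>UNIV. X i j l * a$i * b$j * c$l)"
    unfolding trilin_def by (intro sum.cong refl) (rule sum.swap)
  also have "\<dots> = (\<Sum>l\<in>UNIV. \<Sum>i\<in>UNIV. \<Sum>j\<in>UNIV. X i j l * a$i * b$j * c$l)" by (rule sum.swap)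
  also have "\<dots> = (\<Sum>l\<in>UNIV. c$l * bdot a (slice X l *v b))"
    by (simp add: bdot_def slice_def matrix_vector_mult_def sum_distrib_left mult_ac)
  finally show ?thesis .
qed

lemma slice_diff: "slice (\<lambda>i j k. T i j k - W i j k) l = slice T l - slice W l"
  by (simp add: slice_def vec_eq_iff)

lemma mv_diff_left: "(M - N) *v (x::complex^'n) = M *v x - N *v x"
  by (simp add: matrix_vector_mult_def vec_eq_iff sum_subtractf algebra_simps)

lemma slice_cpd: "slice (cpd A B C) l *v x = A *v (\<chi> r. C$l$r * (transpose B *v x)$r)"
  by (simp add: slice_def cpd_def matrix_vector_mult_def transpose_def vec_eq_iff sum_distrib_left
      sum_distrib_right mult_ac del: transpose_matrix_vector) (intro allI sum.swap)

lemma minvT_cancel: fixes B :: "complex^'n^'n" assumes "invertible B"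
  shows "transpose (matrix_inv B) *v (transpose B *v x) = x"
proof -
  have e: "transpose (matrix_inv B) ** transpose B = transpose (B ** matrix_inv B)"
    by (rule matrix_transpose_mul[symmetric])
  have "transpose (matrix_inv B) *v (transpose B *v x) = (transpose (matrix_inv B) ** transpose B) *v x"
    by (simp only: matrix_vector_mul_assoc)
  also have "\<dots> = x" unfolding e by (simp add: minv[OF assms] del: transpose_matrix_vector)
  finally show ?thesis .
qed

lemma formula_gen:
  fixes A B :: "complex^'r::finite^'r" and C :: "complex^'r^'k::finite" and W :: "('r,'r,'k) tensor"
  assumes A: "invertible A" and B: "invertible B"
    and jge: "\<forall>l. slice W l *v x = lam$l *s y" and Plam: "P *v lam = 0"
  shows "trilin (mode3 (mode2 (mode1 (\<lambda>i j k. cpd A B C i j k - W i j k) (matrix_inv A)) (matrix_inv B)) P)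
           \<alpha> (transpose B *v x) \<beta>
       = (\<Sum>r\<in>UNIV. \<alpha>$r * (transpose B *v x)$r * bdot \<beta> (P *v column r C))"
proof -
  define z where "z = transpose B *v x"
  define \<beta>' where "\<beta>' = transpose P *v \<beta>"
  define \<kappa> where "\<kappa> = bdot \<alpha> (matrix_inv A *v y)"
  let ?E = "\<lambda>i j k. cpd A B C i j k - W i j k"
  have "trilin (mode3 (mode2 (mode1 ?E (matrix_inv A)) (matrix_inv B)) P) \<alpha> z \<beta>
      = trilin ?E (transpose (matrix_inv A) *v \<alpha>) x \<beta>'"
    by (simp only: trilin_mode1 trilin_mode2 trilin_mode3 z_def minvT_cancel[OF B] \<beta>'_def)
  also have "\<dots> = (\<Sum>l\<in>UNIV. \<beta>'$l * bdot (transpose (matrix_inv A) *v \<alpha>) (slice ?E l *v x))"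
    by (rule trilin_slices)
  also have "\<dots> = (\<Sum>l\<in>UNIV. \<beta>'$l * ((\<Sum>r\<in>UNIV. \<alpha>$r * (C$l$r * z$r)) - lam$l * \<kappa>))"
  proof (rule sum.cong[OF refl])
    fix l
    have "bdot (transpose (matrix_inv A) *v \<alpha>) (slice ?E l *v x)
        = bdot \<alpha> (matrix_inv A *v (slice (cpd A B C) l *v x)) - lam$l * \<kappa>"
      by (simp only: slice_diff mv_diff_left bdot_diff bdot_transpose jge mv_scale bdot_scale \<kappa>_def)
    also have "\<dots> = (\<Sum>r\<in>UNIV. \<alpha>$r * (C$l$r * z$r)) - lam$l * \<kappa>"
      by (simp only: slice_cpd minv_vec[OF A] z_def) (simp add: bdot_def)
    finally show "\<beta>'$l * bdot (transpose (matrix_inv A) *v \<alpha>) (slice ?E l *v x)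
        = \<beta>'$l * ((\<Sum>r\<in>UNIV. \<alpha>$r * (C$l$r * z$r)) - lam$l * \<kappa>)" by simp
  qed
  also have "\<dots> = (\<Sum>l\<in>UNIV. \<Sum>r\<in>UNIV. \<beta>'$l * (\<alpha>$r * (C$l$r * z$r))) - bdot \<beta>' lam * \<kappa>"
    by (simp add: right_diff_distrib sum_subtractf sum_distrib_left sum_distrib_right bdot_def mult_ac)
  also have "bdot \<beta>' lam = 0"
    by (simp only: \<beta>'_def bdot_transpose Plam bdot_zero)
  also have "(\<Sum>l\<in>UNIV. \<Sum>r\<in>UNIV. \<beta>'$l * (\<alpha>$r * (C$l$r * z$r)))
      = (\<Sum>r\<in>UNIV. \<Sum>l\<in>UNIV. \<beta>'$l * (\<alpha>$r * (C$l$r * z$r)))" by (rule sum.swap)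
  also have "\<dots> = (\<Sum>r\<in>UNIV. \<alpha>$r * z$r * bdot \<beta>' (column r C))"
    by (simp add: bdot_def column_def sum_distrib_left mult_ac)
  also have "\<dots> = (\<Sum>r\<in>UNIV. \<alpha>$r * z$r * bdot \<beta> (P *v column r C))"
    by (simp only: \<beta>'_def bdot_transpose)
  finally show ?thesis by (simp add: z_def)
qed

lemma sum_axis: "(\<Sum>r\<in>UNIV. (axis a (1::complex))$r * f r) = f (a::'n::finite)"
proof -
  have "(\<Sum>r\<in>UNIV. (axis a (1::complex))$r * f r) = (\<Sum>r\<in>UNIV. if a = r then f r else 0)"
    by (rule sum.cong) (auto simp: axis_def)
  then show ?thesis by simp
qed

lemma bdot_axis: "bdot (axis s (1::complex)) u = u $ (s::'n::finite)"
  unfolding bdot_def by (rule sum_axis)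

lemma bdot_scale_left: "bdot (c *s a) u = c * bdot a u"
  by (simp add: bdot_def sum_distrib_left mult_ac)

lemma vec_nonzero_transpose: fixes B :: "complex^'n^'n"
  assumes "invertible B" "x \<noteq> 0" shows "transpose B *v x \<noteq> 0"
  using minvT_cancel[OF assms(1), of x] assms(2) by auto

lemma exists_max_comp: "\<exists>a. \<forall>r. cmod ((z::complex^'n) $ r) \<le> cmod (z $ a)"
proof -
  have "finite (range (\<lambda>r. cmod (z$r)))" by simp
  moreover have "range (\<lambda>r. cmod (z$r)) \<noteq> {}" by simp
  ultimately have "Max (range (\<lambda>r. cmod (z$r))) \<in> range (\<lambda>r. cmod (z$r))" by (rule Max_in)
  then obtain a where a: "Max (range (\<lambda>r. cmod (z$r))) = cmod (z$a)" by blast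
  have "\<forall>r. cmod (z$r) \<le> cmod (z$a)" unfolding a[symmetric] by simp
  then show ?thesis by blast
qed

lemma norm_le_sqrt_card: assumes "\<forall>r. cmod ((z::complex^'n) $ r) \<le> cmod (z $ a)"
  shows "norm z \<le> sqrt (real CARD('n)) * cmod (z $ a)"
proof -
  have "(norm z)\<^sup>2 = (\<Sum>r\<in>UNIV. (cmod (z$r))\<^sup>2)" by (rule norm_sq_vec)
  also have "\<dots> \<le> (\<Sum>r\<in>(UNIV::'n set). (cmod (z$a))\<^sup>2)"
    by (rule sum_mono) (use assms in \<open>auto intro: power_mono\<close>)
  also have "\<dots> = (sqrt (real CARD('n)) * cmod (z $ a))\<^sup>2"
    by (simp add: power_mult_distrib)
  finally show ?thesis
    by (rule power2_le_imp_le) simp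
qed

lemma lower_gen:
  fixes A B :: "complex^'r::finite^'r" and C :: "complex^'r^'k::finite" and W :: "('r,'r,'k) tensor"
  assumes K: "field_K Ks" and A: "invertible A" and B: "invertible B"
    and Bin: "mat_in Ks B" and Cin: "mat_in Ks C"
    and x: "vec_in Ks x" "x \<noteq> 0"
    and jge: "\<forall>l. slice W l *v x = lam$l *s y" and lam: "lam \<noteq> 0" "vec_in Ks lam"
  shows "\<exists>a. norm (proj_perp Ks (kspan Ks lam) *v column a C) \<le>
     sqrt (real CARD('r)) * sp_norm Ks (mode3 (mode2 (mode1 (\<lambda>i j k. cpd A B C i j k - W i j k) (matrix_inv A)) (matrix_inv B)) (proj_perp Ks (kspan Ks lam)))"
proof -
  define P where "P = proj_perp Ks (kspan Ks lam)"
  define F where "F = mode3 (mode2 (mode1 (\<lambda>i j k. cpd A B C i j k - W i j k) (matrix_inv A)) (matrix_inv B)) P"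
  define z where "z = transpose B *v x"
  have z0: "z \<noteq> 0" unfolding z_def by (rule vec_nonzero_transpose[OF B x(2)])
  have zin: "vec_in Ks z" unfolding z_def using K Bin x by auto
  have Pin: "mat_in Ks P" unfolding P_def by (rule proj_in[OF K lam])
  have Plam: "P *v lam = 0" using proj_kill[OF K lam(1), of 1] by (simp add: P_def)
  obtain a where amax: "\<forall>r. cmod (z $ r) \<le> cmod (z $ a)" using exists_max_comp by blast
  have nz: "norm z \<le> sqrt (real CARD('r)) * cmod (z $ a)" by (rule norm_le_sqrt_card[OF amax])
  define u where "u = P *v column a C"
  have Fnn: "0 \<le> sp_norm Ks F" by (rule sp_nonneg[OF K])
  have "norm u \<le> sqrt (real CARD('r)) * sp_norm Ks F"
  proof (cases "u = 0")
    case True then show ?thesis using Fnn by simp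
  next
    case False
    define \<beta> where "\<beta> = complex_of_real (1 / norm u) *s vcnj u"
    define v where "v = complex_of_real (1 / norm z) *s z"
    have uin: "vec_in Ks u" unfolding u_def using K Pin Cin by auto
    have \<beta>in: "vec_in Ks \<beta>" unfolding \<beta>_def using K uin by (intro vec_in_scale vec_in_vcnj) auto
    have vin: "vec_in Ks v" unfolding v_def using K zin by (intro vec_in_scale) auto
    have n\<beta>: "norm \<beta> = 1" using False by (simp add: \<beta>_def norm_vsmult norm_divide)
    have nv: "norm v = 1" using z0 by (simp add: v_def norm_vsmult norm_divide)
    have "trilin F (axis a 1) v \<beta> = complex_of_real (1 / norm z) * trilin F (axis a 1) z \<beta>"
      by (simp only: v_def trilin_scale2)
    also have "trilin F (axis a 1) z \<beta> = (\<Sum>r\<in>UNIV. (axis a 1)$r * z$r * bdot \<beta> (P *v column r C))"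
      unfolding F_def z_def by (rule formula_gen[OF A B jge Plam])
    also have "\<dots> = z$a * bdot \<beta> u"
      using sum_axis[of a "\<lambda>r. z$r * bdot \<beta> (P *v column r C)"] by (simp add: mult.assoc u_def)
    also have "bdot \<beta> u = complex_of_real (norm u)"
    proof -
      have "bdot \<beta> u = complex_of_real (1 / norm u) * bdot (vcnj u) u"
        by (simp only: \<beta>_def bdot_scale_left)
      also have "\<dots> = complex_of_real (1 / norm u) * complex_of_real ((norm u)\<^sup>2)"
        by (simp only: bdot_vcnj_self)
      also have "\<dots> = complex_of_real (norm u)" using False by (simp add: power2_eq_square)
      finally show ?thesis .
    qed
    finally have tv: "trilin F (axis a 1) v \<beta> = complex_of_real (1 / norm z) * (z$a * complex_of_real (norm u))" .
    have "cmod (trilin F (axis a 1) v \<beta>) \<le> sp_norm Ks F"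
      by (rule sp_upper) (use K vin \<beta>in nv n\<beta> in auto)
    then have "cmod (z$a) * norm u / norm z \<le> sp_norm Ks F"
      unfolding tv by (simp add: norm_mult norm_divide)
    then have "cmod (z$a) * norm u \<le> sp_norm Ks F * norm z"
      using z0 by (simp add: divide_le_eq)
    then have h1: "sqrt (real CARD('r)) * (cmod (z$a) * norm u) \<le> sqrt (real CARD('r)) * (sp_norm Ks F * norm z)"
      by (rule mult_left_mono) simp
    have "norm u * norm z \<le> norm u * (sqrt (real CARD('r)) * cmod (z $ a))"
      by (rule mult_left_mono[OF nz]) simp
    also have "\<dots> = sqrt (real CARD('r)) * (cmod (z$a) * norm u)" by (simp only: mult_ac)
    also have "\<dots> \<le> sqrt (real CARD('r)) * (sp_norm Ks F * norm z)" by (rule h1)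
    also have "\<dots> = (sqrt (real CARD('r)) * sp_norm Ks F) * norm z" by (simp only: mult_ac)
    finally have "norm u * norm z \<le> (sqrt (real CARD('r)) * sp_norm Ks F) * norm z" .
    then show ?thesis using z0 by simp
  qed
  then show ?thesis unfolding u_def P_def F_def by blast
qed

lemma minvT_cancel2: fixes B :: "complex^'n^'n" assumes "invertible B"
  shows "transpose B *v (transpose (matrix_inv B) *v x) = x"
proof -
  have e: "transpose B ** transpose (matrix_inv B) = transpose (matrix_inv B ** B)"
    by (rule matrix_transpose_mul[symmetric])
  have "transpose B *v (transpose (matrix_inv B) *v x) = (transpose B ** transpose (matrix_inv B)) *v x"
    by (simp only: matrix_vector_mul_assoc)
  also have "\<dots> = x" unfolding e by (simp add: minv[OF assms] del: transpose_matrix_vector)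
  finally show ?thesis .
qed

lemma mv_diff_right: "(M::complex^'n^'m) *v (u - v) = M *v u - M *v v"
  by (simp add: matrix_vector_mult_def vec_eq_iff sum_subtractf algebra_simps)

lemma chi_axis: "(\<chi> r. f r * (axis s (1::complex))$r) = f s *s axis s 1"
  by (simp add: vec_eq_iff axis_def)

lemma formula_case2:
  fixes A B AW BW :: "complex^'r::finite^'r" and C CW :: "complex^'r^'k::finite"
  assumes A: "invertible A" and B: "invertible B"
    and AWB: "AW = A \<or> BW = B" and Pcw: "P *v column s CW = 0"
  shows "trilin (mode3 (mode2 (mode1 (\<lambda>i j k. cpd A B C i j k - cpd AW BW CW i j k) (matrix_inv A)) (matrix_inv B)) P)
           (axis s 1) (axis s 1) \<beta> = bdot \<beta> (P *v column s C)"
proof -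
  define e where "e = (axis s 1 :: complex^'r)"
  define v where "v = transpose (matrix_inv B) *v e"
  define \<beta>' where "\<beta>' = transpose P *v \<beta>"
  have Bv: "transpose B *v v = e" unfolding v_def by (rule minvT_cancel2[OF B])
  obtain \<kappa> where kap: "\<And>l. (matrix_inv A *v (slice (cpd AW BW CW) l *v v)) $ s = \<kappa> * CW$l$s"
  proof (cases "AW = A")
    case True
    show ?thesis
    proof (rule that)
      fix l
      have "(matrix_inv A *v (slice (cpd AW BW CW) l *v v)) $ s = CW$l$s * (transpose BW *v v)$s"
        by (simp only: slice_cpd True minv_vec[OF A] vec_lambda_beta)
      then show "(matrix_inv A *v (slice (cpd AW BW CW) l *v v)) $ s = (transpose BW *v v)$s * CW$l$s"
        by (simp add: mult.commute)
    qed
  next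
    case False
    then have BW: "BW = B" using AWB by simp
    show ?thesis
    proof (rule that)
      fix l
      have "(matrix_inv A *v (slice (cpd AW BW CW) l *v v)) $ s = (matrix_inv A *v (AW *v (CW$l$s *s e))) $ s"
        by (simp only: slice_cpd BW Bv e_def chi_axis)
      also have "\<dots> = (matrix_inv A *v (AW *v e)) $ s * CW$l$s"
        by (simp only: mv_scale vector_smult_component mult.commute)
      finally show "(matrix_inv A *v (slice (cpd AW BW CW) l *v v)) $ s = (matrix_inv A *v (AW *v e)) $ s * CW$l$s" .
    qed
  qed
  let ?E = "\<lambda>i j k. cpd A B C i j k - cpd AW BW CW i j k"
  have "trilin (mode3 (mode2 (mode1 ?E (matrix_inv A)) (matrix_inv B)) P) e e \<beta>
      = trilin ?E (transpose (matrix_inv A) *v e) v \<beta>'"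
    by (simp only: trilin_mode1 trilin_mode2 trilin_mode3 v_def \<beta>'_def)
  also have "\<dots> = (\<Sum>l\<in>UNIV. \<beta>'$l * bdot (transpose (matrix_inv A) *v e) (slice ?E l *v v))"
    by (rule trilin_slices)
  also have "\<dots> = (\<Sum>l\<in>UNIV. \<beta>'$l * (C$l$s - \<kappa> * CW$l$s))"
  proof (rule sum.cong[OF refl])
    fix l
    have "bdot (transpose (matrix_inv A) *v e) (slice ?E l *v v)
        = (matrix_inv A *v (slice (cpd A B C) l *v v)) $ s - (matrix_inv A *v (slice (cpd AW BW CW) l *v v)) $ s"
      by (simp only: slice_diff mv_diff_left mv_diff_right bdot_transpose e_def bdot_axis vector_minus_component)
    also have "\<dots> = C$l$s - \<kappa> * CW$l$s"
      apply (subst kap)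
      by (simp only: slice_cpd minv_vec[OF A] Bv e_def chi_axis vec_lambda_beta vector_smult_component axis_nth) simp
    finally show "\<beta>'$l * bdot (transpose (matrix_inv A) *v e) (slice ?E l *v v) = \<beta>'$l * (C$l$s - \<kappa> * CW$l$s)"
      by simp
  qed
  also have "\<dots> = bdot \<beta>' (column s C) - \<kappa> * bdot \<beta>' (column s CW)"
    by (simp add: bdot_def column_def right_diff_distrib sum_subtractf sum_distrib_left mult_ac)
  also have "\<dots> = bdot \<beta> (P *v column s C)"
    by (simp only: \<beta>'_def bdot_transpose Pcw bdot_zero mult_zero_right diff_zero)
  finally show ?thesis by (simp only: e_def)
qed

lemma lower_case2:
  fixes A B AW BW :: "complex^'r::finite^'r" and C CW :: "complex^'r^'k::finite"
  assumes K: "field_K Ks" and A: "invertible A" and B: "invertible B" and Cin: "mat_in Ks C"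
    and lam: "lam \<noteq> 0" "vec_in Ks lam"
    and AWB: "AW = A \<or> BW = B" and Pcw: "proj_perp Ks (kspan Ks lam) *v column s CW = 0"
  shows "norm (proj_perp Ks (kspan Ks lam) *v column s C) \<le>
     sp_norm Ks (mode3 (mode2 (mode1 (\<lambda>i j k. cpd A B C i j k - cpd AW BW CW i j k) (matrix_inv A)) (matrix_inv B)) (proj_perp Ks (kspan Ks lam)))"
proof -
  define P where "P = proj_perp Ks (kspan Ks lam)"
  define F where "F = mode3 (mode2 (mode1 (\<lambda>i j k. cpd A B C i j k - cpd AW BW CW i j k) (matrix_inv A)) (matrix_inv B)) P"
  have Pin: "mat_in Ks P" unfolding P_def by (rule proj_in[OF K lam])
  define u where "u = P *v column s C"
  have "norm u \<le> sp_norm Ks F"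
  proof (cases "u = 0")
    case True then show ?thesis using sp_nonneg[OF K] by simp
  next
    case False
    define \<beta> where "\<beta> = complex_of_real (1 / norm u) *s vcnj u"
    have uin: "vec_in Ks u" unfolding u_def using K Pin Cin by auto
    have \<beta>in: "vec_in Ks \<beta>" unfolding \<beta>_def using K uin by (intro vec_in_scale vec_in_vcnj) auto
    have n\<beta>: "norm \<beta> = 1" using False by (simp add: \<beta>_def norm_vsmult norm_divide)
    have "trilin F (axis s 1) (axis s 1) \<beta> = bdot \<beta> u"
      unfolding F_def u_def by (rule formula_case2[OF A B AWB]) (simp add: Pcw P_def)
    also have "bdot \<beta> u = complex_of_real (norm u)"
    proof -
      have "bdot \<beta> u = complex_of_real (1 / norm u) * bdot (vcnj u) u"
        by (simp only: \<beta>_def bdot_scale_left)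
      also have "\<dots> = complex_of_real (1 / norm u) * complex_of_real ((norm u)\<^sup>2)"
        by (simp only: bdot_vcnj_self)
      also have "\<dots> = complex_of_real (norm u)" using False by (simp add: power2_eq_square)
      finally show ?thesis .
    qed
    finally have tv: "trilin F (axis s 1) (axis s 1) \<beta> = complex_of_real (norm u)" .
    have "cmod (trilin F (axis s 1) (axis s 1) \<beta>) \<le> sp_norm Ks F"
      by (rule sp_upper) (use K \<beta>in n\<beta> in auto)
    then show ?thesis unfolding tv by simp
  qed
  then show ?thesis unfolding u_def P_def F_def .
qed

lemma lagrange2: "((c1::complex)*cc1 + c2*cc2)*(w1*cw1 + w2*cw2) = (c1*cw1 + c2*cw2)*(cc1*w1 + cc2*w2) + (c2*w1 - c1*w2)*(cc2*cw1 - cc1*cw2)"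
  by (simp add: algebra_simps)

lemma k2_complement:
  fixes w :: "complex^'k::finite"
  assumes card: "CARD('k) = 2" and w0: "w \<noteq> 0" and K: "field_K Ks" and win: "vec_in Ks w"
  shows "\<exists>v. vec_in Ks v \<and> norm v = 1 \<and> hinner w v = 0 \<and>
     (\<forall>c. (norm c)\<^sup>2 * (norm w)\<^sup>2 = (cmod (hinner c w))\<^sup>2 + (norm w)\<^sup>2 * (cmod (hinner c v))\<^sup>2)"
proof -
  obtain k1 k2 :: 'k where kk: "(UNIV::'k set) = {k1, k2}" "k1 \<noteq> k2"
    using card card_2_iff[of "UNIV::'k set"] by blast
  have sum2: "(\<Sum>k\<in>UNIV. f k) = f k1 + f k2" for f :: "'k \<Rightarrow> complex"
  proof -
    have "(\<Sum>k\<in>UNIV. f k) = (\<Sum>k\<in>{k1,k2}. f k)" by (simp only: kk(1))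
    also have "\<dots> = f k1 + f k2" using kk(2) by simp
    finally show ?thesis .
  qed
  define nw where "nw = complex_of_real (norm w)"
  have nw0: "nw \<noteq> 0" using w0 by (simp add: nw_def)
  have cnw: "cnj nw = nw" by (simp add: nw_def)
  define v :: "complex^'k" where "v = (\<chi> k. if k = k1 then - cnj (w$k2) / nw else cnj (w$k1) / nw)"
  have v1: "v$k1 = - cnj (w$k2) / nw" and v2: "v$k2 = cnj (w$k1) / nw"
    using kk by (simp_all add: v_def)
  have hv: "hinner c v = (c$k2 * w$k1 - c$k1 * w$k2) / nw" for c
    by (simp add: hinner_def sum2 v1 v2 cnw diff_divide_distrib)
  have hw: "hinner c w = c$k1 * cnj (w$k1) + c$k2 * cnj (w$k2)" for c
    by (simp add: hinner_def sum2)
  have nsq: "complex_of_real ((norm c)\<^sup>2) = c$k1 * cnj (c$k1) + c$k2 * cnj (c$k2)" for c :: "complex^'k"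
    by (simp only: norm_sq_vec_c sum2)
  have nwsq: "nw * nw = complex_of_real ((norm w)\<^sup>2)" by (simp add: nw_def power2_eq_square)
  have vin: "vec_in Ks v"
    unfolding v_def nw_def using K win by (auto intro!: vec_in_lambda Ks_divide Ks_uminus Ks_cnj simp: vec_inD)
  have hwv: "hinner w v = 0" by (simp add: hv)
  have key: "(norm c)\<^sup>2 * (norm w)\<^sup>2 = (cmod (hinner c w))\<^sup>2 + (norm w)\<^sup>2 * (cmod (hinner c v))\<^sup>2" for c
  proof -
    define d where "d = c$k2 * w$k1 - c$k1 * w$k2"
    have "complex_of_real ((norm w)\<^sup>2 * (cmod (hinner c v))\<^sup>2) = complex_of_real ((cmod d)\<^sup>2)"
    proof -
      have "complex_of_real ((cmod (hinner c v))\<^sup>2) = hinner c v * cnj (hinner c v)"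
        by (rule complex_norm_square)
      also have "\<dots> = d * cnj d / (nw * nw)" by (simp add: hv d_def cnw)
      finally have "complex_of_real ((norm w)\<^sup>2) * complex_of_real ((cmod (hinner c v))\<^sup>2) = d * cnj d"
        using nw0 nwsq w0 by (simp add: field_simps)
      then show ?thesis by (simp only: of_real_mult complex_norm_square)
    qed
    then have e1: "(norm w)\<^sup>2 * (cmod (hinner c v))\<^sup>2 = (cmod d)\<^sup>2" by (simp only: of_real_eq_iff)
    have "complex_of_real ((norm c)\<^sup>2 * (norm w)\<^sup>2) = complex_of_real ((cmod (hinner c w))\<^sup>2 + (cmod d)\<^sup>2)"
    proof -
      have "complex_of_real ((norm c)\<^sup>2 * (norm w)\<^sup>2) = complex_of_real ((norm c)\<^sup>2) * complex_of_real ((norm w)\<^sup>2)"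
        by simp
      also have "\<dots> = (c$k1 * cnj (c$k1) + c$k2 * cnj (c$k2)) * (w$k1 * cnj (w$k1) + w$k2 * cnj (w$k2))"
        by (simp only: nsq)
      also have "\<dots> = hinner c w * cnj (hinner c w) + d * cnj d"
        unfolding hw d_def by (simp add: algebra_simps)
      also have "\<dots> = complex_of_real ((cmod (hinner c w))\<^sup>2 + (cmod d)\<^sup>2)"
        by (simp only: of_real_add complex_norm_square)
      finally show ?thesis .
    qed
    then have "(norm c)\<^sup>2 * (norm w)\<^sup>2 = (cmod (hinner c w))\<^sup>2 + (cmod d)\<^sup>2" by (simp only: of_real_eq_iff)
    then show ?thesis using e1 by simp
  qed
  have nv: "norm v = 1"
  proof -
    have "(norm w)\<^sup>2 * (norm v)\<^sup>2 = (cmod (hinner v w))\<^sup>2 + (norm w)\<^sup>2 * (cmod (hinner v v))\<^sup>2"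
      using key[of v] by (simp add: mult.commute)
    moreover have "hinner v w = 0" using hwv hinner_swap[of v w] by simp
    moreover have "cmod (hinner v v) = (norm v)\<^sup>2" by (simp only: hinner_self norm_of_real) simp
    ultimately have h: "(norm w)\<^sup>2 * (norm v)\<^sup>2 = (norm w)\<^sup>2 * ((norm v)\<^sup>2 * (norm v)\<^sup>2)"
      by (simp only: power2_eq_square mult_zero_left add_0 norm_zero)
    have gen: "\<And>a s::real. a \<noteq> 0 \<Longrightarrow> a * s = a * (s * s) \<Longrightarrow> s = 0 \<or> s = 1"
    proof -
      fix a s :: real assume "a \<noteq> 0" "a * s = a * (s * s)"
      then have "s * (s - 1) = 0" by (simp add: algebra_simps)
      then show "s = 0 \<or> s = 1" by simp
    qed
    have "(norm v)\<^sup>2 = 0 \<or> (norm v)\<^sup>2 = 1" by (rule gen[OF _ h]) (use w0 in simp)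
    moreover have "v \<noteq> 0"
    proof
      assume "v = 0"
      then have "v$k1 = 0" "v$k2 = 0" by simp_all
      then have "w$k1 = 0" "w$k2 = 0" using nw0 by (simp_all add: v1 v2)
      then have "w = 0" using kk by (auto simp: vec_eq_iff)
      then show False using w0 by simp
    qed
    ultimately show ?thesis using norm_ge_zero[of v] by (auto simp add: power2_eq_1_iff)
  qed
  show ?thesis using vin nv hwv key by blast
qed

lemma hinner_in: "field_K Ks \<Longrightarrow> vec_in Ks u \<Longrightarrow> vec_in Ks v \<Longrightarrow> hinner u v \<in> Ks"
  unfolding hinner_def by (auto intro!: Ks_sum Ks_mult Ks_cnj simp: vec_inD)

lemma lower_K2:
  fixes A B :: "complex^'r::finite^'r" and C :: "complex^'r^'k::finite" and W :: "('r,'r,'k) tensor"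
  assumes K: "field_K Ks" and A: "invertible A" and B: "invertible B"
    and Bin: "mat_in Ks B" and Cin: "mat_in Ks C"
    and x: "vec_in Ks x" "x \<noteq> 0"
    and jge: "\<forall>l. slice W l *v x = lam$l *s y" and lam: "lam \<noteq> 0" "vec_in Ks lam"
    and card: "CARD('k) = 2"
  shows "Min (range (\<lambda>r. norm (proj_perp Ks (kspan Ks lam) *v column r C))) \<le>
     sp_norm Ks (mode3 (mode2 (mode1 (\<lambda>i j k. cpd A B C i j k - W i j k) (matrix_inv A)) (matrix_inv B)) (proj_perp Ks (kspan Ks lam)))"
proof -
  define P where "P = proj_perp Ks (kspan Ks lam)"
  define F where "F = mode3 (mode2 (mode1 (\<lambda>i j k. cpd A B C i j k - W i j k) (matrix_inv A)) (matrix_inv B)) P"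
  define z where "z = transpose B *v x"
  define w where "w = line_rep Ks (kspan Ks lam)"
  obtain t where t: "t \<in> Ks" "t \<noteq> 0" "w = t *s lam"
    using line_rep_kspan[OF K lam(1)] unfolding w_def by blast
  have w0: "w \<noteq> 0" using t lam by simp
  have win: "vec_in Ks w" using t lam K by auto
  obtain v where v: "vec_in Ks v" "norm v = 1" "hinner w v = 0"
    and lag: "\<And>c. (norm c)\<^sup>2 * (norm w)\<^sup>2 = (cmod (hinner c w))\<^sup>2 + (norm w)\<^sup>2 * (cmod (hinner c v))\<^sup>2"
    using k2_complement[OF card w0 K win] by blast
  have z0: "z \<noteq> 0" unfolding z_def by (rule vec_nonzero_transpose[OF B x(2)])
  have zin: "vec_in Ks z" unfolding z_def using K Bin x by auto
  have Plam: "P *v lam = 0" using proj_kill[OF K lam(1), of 1] by (simp add: P_def)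
  have Pc: "P *v c = c - (hinner c w / complex_of_real ((norm w)\<^sup>2)) *s w" for c
    unfolding P_def w_def by (rule proj_apply)
  have chi: "norm (P *v c) = cmod (hinner c v)" for c
  proof -
    have "(norm (P *v c))\<^sup>2 = (norm c)\<^sup>2 - (cmod (hinner c w))\<^sup>2 / (norm w)\<^sup>2"
      unfolding Pc by (rule proj_norm_sq[OF w0])
    also have "\<dots> = (cmod (hinner c v))\<^sup>2"
      using lag[of c] w0 by (simp add: field_simps)
    finally show ?thesis by (simp add: power2_eq_iff_nonneg)
  qed
  have bv: "bdot (vcnj v) (P *v c) = hinner c v" for c
  proof -
    have "bdot (vcnj v) (P *v c) = hinner (P *v c) v" by (simp add: bdot_def hinner_def mult.commute)
    also have "\<dots> = hinner c v"
      unfolding Pc by (simp add: hinner_diff_left hinner_scale_left v(3))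
    finally show ?thesis .
  qed
  define h where "h r = hinner (column r C) v" for r
  define q where "q = (\<chi> r. z$r * h r)"
  define m where "m = Min (range (\<lambda>r. norm (P *v column r C)))"
  have mle: "m \<le> cmod (h r)" for r unfolding m_def h_def chi by simp
  have m0: "0 \<le> m"
  proof -
    have "m \<in> range (\<lambda>r. norm (P *v column r C))" unfolding m_def by (rule Min_in) auto
    then show ?thesis by auto
  qed
  have Fnn: "0 \<le> sp_norm Ks F" by (rule sp_nonneg[OF K])
  have mq: "m * norm z \<le> norm q"
  proof -
    have "(m * norm z)\<^sup>2 = (\<Sum>r\<in>UNIV. m\<^sup>2 * (cmod (z$r))\<^sup>2)"
      by (simp add: power_mult_distrib norm_sq_vec sum_distrib_left)
    also have "\<dots> \<le> (\<Sum>r\<in>UNIV. (cmod (q$r))\<^sup>2)"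
    proof (rule sum_mono)
      fix r
      have "m\<^sup>2 \<le> (cmod (h r))\<^sup>2" using mle[of r] m0 by (simp add: power_mono)
      then have "m\<^sup>2 * (cmod (z$r))\<^sup>2 \<le> (cmod (h r))\<^sup>2 * (cmod (z$r))\<^sup>2"
        by (rule mult_right_mono) simp
      then show "m\<^sup>2 * (cmod (z$r))\<^sup>2 \<le> (cmod (q$r))\<^sup>2"
        by (simp add: q_def norm_mult power_mult_distrib mult.commute)
    qed
    also have "\<dots> = (norm q)\<^sup>2" by (simp add: norm_sq_vec)
    finally show ?thesis by (rule power2_le_imp_le) simp
  qed
  have qF: "norm q \<le> norm z * sp_norm Ks F"
  proof (cases "q = 0")
    case True then show ?thesis using Fnn by simp
  next
    case False
    define \<alpha> where "\<alpha> = complex_of_real (1 / norm q) *s vcnj q"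
    define vv where "vv = complex_of_real (1 / norm z) *s z"
    have qin: "vec_in Ks q" unfolding q_def h_def using K zin Cin v(1)
      by (auto intro!: vec_in_lambda Ks_mult hinner_in simp: vec_inD)
    have \<alpha>in: "vec_in Ks \<alpha>" unfolding \<alpha>_def using K qin by (intro vec_in_scale vec_in_vcnj) auto
    have vvin: "vec_in Ks vv" unfolding vv_def using K zin by (intro vec_in_scale) auto
    have n\<alpha>: "norm \<alpha> = 1" using False by (simp add: \<alpha>_def norm_vsmult norm_divide)
    have nvv: "norm vv = 1" using z0 by (simp add: vv_def norm_vsmult norm_divide)
    have "trilin F \<alpha> vv (vcnj v) = complex_of_real (1 / norm z) * trilin F \<alpha> z (vcnj v)"
      by (simp only: vv_def trilin_scale2)
    also have "trilin F \<alpha> z (vcnj v) = (\<Sum>r\<in>UNIV. \<alpha>$r * z$r * bdot (vcnj v) (P *v column r C))"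
      unfolding F_def z_def by (rule formula_gen[OF A B jge Plam])
    also have "\<dots> = bdot \<alpha> q"
      by (simp only: bv) (simp add: bdot_def q_def h_def mult.assoc)
    also have "\<dots> = complex_of_real (norm q)"
    proof -
      have "bdot \<alpha> q = complex_of_real (1 / norm q) * bdot (vcnj q) q"
        by (simp only: \<alpha>_def bdot_scale_left)
      also have "\<dots> = complex_of_real (1 / norm q) * complex_of_real ((norm q)\<^sup>2)"
        by (simp only: bdot_vcnj_self)
      also have "\<dots> = complex_of_real (norm q)" using False by (simp add: power2_eq_square)
      finally show ?thesis .
    qed
    finally have tv: "trilin F \<alpha> vv (vcnj v) = complex_of_real (1 / norm z) * complex_of_real (norm q)" .
    have "cmod (trilin F \<alpha> vv (vcnj v)) \<le> sp_norm Ks F"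
      by (rule sp_upper) (use K \<alpha>in vvin v nvv n\<alpha> in auto)
    then have "norm q / norm z \<le> sp_norm Ks F" unfolding tv by (simp add: norm_mult norm_divide)
    then show ?thesis using z0 by (simp add: divide_le_eq mult.commute)
  qed
  have "m * norm z \<le> sp_norm Ks F * norm z" using mq qF by (simp add: mult.commute)
  then have "m \<le> sp_norm Ks F" using z0 by simp
  then show ?thesis unfolding m_def P_def F_def .
qed

lemma bdot_axis_right: "bdot u (axis k (1::complex)) = u $ (k::'n::finite)"
proof -
  have "bdot u (axis k 1) = (\<Sum>r\<in>UNIV. (axis k (1::complex))$r * u$r)" by (simp add: bdot_def mult.commute)
  then show ?thesis by (simp only: sum_axis)
qed

lemma Ks_of_nat[simp]: "field_K Ks \<Longrightarrow> (of_nat n :: complex) \<in> Ks"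
  by (auto simp: field_K_def)

lemma bdot_add: "bdot a (u + v) = bdot a u + bdot a v"
  by (simp add: bdot_def algebra_simps sum.distrib)

lemma bdot_in: "field_K Ks \<Longrightarrow> vec_in Ks u \<Longrightarrow> vec_in Ks v \<Longrightarrow> bdot u v \<in> Ks"
  unfolding bdot_def by (auto intro!: Ks_sum Ks_mult simp: vec_inD)

lemma annih:
  fixes g f :: "complex^'k::finite"
  assumes K: "field_K Ks" and g0: "g \<noteq> 0" and gin: "vec_in Ks g" and fin: "vec_in Ks f"
    and H: "\<forall>\<delta>. vec_in Ks \<delta> \<longrightarrow> bdot g \<delta> = 0 \<longrightarrow> bdot f \<delta> = 0"
  shows "\<exists>t. t \<in> Ks \<and> f = t *s g"
proof -
  obtain k0 where k0: "g$k0 \<noteq> 0" using g0 by (auto simp: vec_eq_iff)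
  define t where "t = f$k0 / g$k0"
  have tin: "t \<in> Ks" unfolding t_def using K gin fin by (auto simp: vec_inD)
  have "f$k = t * g$k" for k
  proof -
    define \<delta> where "\<delta> = (g$k0) *s axis k 1 - (g$k) *s axis k0 1"
    have din: "vec_in Ks \<delta>" unfolding \<delta>_def using K gin by (auto intro!: vec_in_diff vec_in_scale simp: vec_inD)
    have "bdot g \<delta> = g$k0 * g$k - g$k * g$k0"
      by (simp only: \<delta>_def bdot_diff bdot_scale bdot_axis_right)
    then have "bdot g \<delta> = 0" by simp
    then have "bdot f \<delta> = 0" using H din by blast
    moreover have "bdot f \<delta> = g$k0 * f$k - g$k * f$k0"
      by (simp only: \<delta>_def bdot_diff bdot_scale bdot_axis_right)
    ultimately have "g$k0 * f$k = g$k * f$k0" by simp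
    then show ?thesis using k0 unfolding t_def by (simp add: field_simps)
  qed
  then have "f = t *s g" by (simp add: vec_eq_iff)
  then show ?thesis using tin by blast
qed

lemma finite_roots_nat: assumes "a \<noteq> 0 \<or> b \<noteq> 0"
  shows "finite {n::nat. a + of_nat n * (b::complex) = 0}"
proof (cases "b = 0")
  case True then show ?thesis using assms by simp
next
  case False
  have "{n::nat. a + of_nat n * b = 0} \<subseteq> {n. n \<le> nat \<lceil>cmod (- a / b)\<rceil>}"
  proof
    fix n assume "n \<in> {n::nat. a + of_nat n * b = 0}"
    then have "of_nat n = - a / b" using False by (simp add: field_simps add_eq_0_iff)
    then have "real n = cmod (- a / b)" by (metis norm_of_nat)
    then show "n \<in> {n. n \<le> nat \<lceil>cmod (- a / b)\<rceil>}" by simp linarith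
  qed
  then show ?thesis by (rule finite_subset) simp
qed

lemma avoid_union:
  fixes g :: "complex^'k::finite" and f :: "'r \<Rightarrow> complex^'k"
  assumes K: "field_K Ks" and gin: "vec_in Ks g"
    and D: "\<forall>r. \<exists>\<delta>. vec_in Ks \<delta> \<and> bdot g \<delta> = 0 \<and> bdot (f r) \<delta> \<noteq> 0"
    and S: "finite S"
  shows "\<exists>\<gamma>. vec_in Ks \<gamma> \<and> bdot g \<gamma> = 0 \<and> (\<forall>r\<in>S. bdot (f r) \<gamma> \<noteq> 0)"
  using S
proof (induction S rule: finite_induct)
  case empty
  show ?case by (rule exI[of _ 0]) (use K in \<open>simp add: bdot_def\<close>)
next
  case (insert r0 S)
  obtain \<gamma> where \<gamma>: "vec_in Ks \<gamma>" "bdot g \<gamma> = 0" "\<forall>r\<in>S. bdot (f r) \<gamma> \<noteq> 0" using insert.IH by blast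
  obtain \<delta> where \<delta>: "vec_in Ks \<delta>" "bdot g \<delta> = 0" "bdot (f r0) \<delta> \<noteq> 0" using D by blast
  define bad where "bad = (\<Union>r\<in>insert r0 S. {n::nat. bdot (f r) \<gamma> + of_nat n * bdot (f r) \<delta> = 0})"
  have "finite bad" unfolding bad_def
    using insert.hyps(1) \<gamma>(3) \<delta>(3) by (auto intro!: finite_roots_nat)
  then obtain n where n: "n \<notin> bad" using ex_new_if_finite[OF infinite_UNIV_nat] by blast
  define \<gamma>' where "\<gamma>' = \<gamma> + of_nat n *s \<delta>"
  have "vec_in Ks \<gamma>'" unfolding \<gamma>'_def using K \<gamma>(1) \<delta>(1) by (auto intro!: vec_in_add vec_in_scale)
  moreover have "bdot g \<gamma>' = 0" unfolding \<gamma>'_def by (simp only: bdot_add bdot_scale \<gamma>(2) \<delta>(2)) simp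
  moreover have "\<forall>r\<in>insert r0 S. bdot (f r) \<gamma>' \<noteq> 0"
  proof
    fix r assume r: "r \<in> insert r0 S"
    have "bdot (f r) \<gamma>' = bdot (f r) \<gamma> + of_nat n * bdot (f r) \<delta>"
      unfolding \<gamma>'_def by (simp only: bdot_add bdot_scale)
    then show "bdot (f r) \<gamma>' \<noteq> 0" using n r unfolding bad_def by auto
  qed
  ultimately show ?case by blast
qed

lemma factor_lemma:
  fixes g :: "complex^'k::finite" and f :: "'r::finite \<Rightarrow> complex^'k"
  assumes K: "field_K Ks" and g0: "g \<noteq> 0" and gin: "vec_in Ks g" and fin: "\<forall>r. vec_in Ks (f r)"
    and H: "\<forall>\<gamma>. vec_in Ks \<gamma> \<longrightarrow> bdot g \<gamma> = 0 \<longrightarrow> (\<Prod>r\<in>UNIV. bdot (f r) \<gamma>) = 0"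
  shows "\<exists>r t. t \<in> Ks \<and> f r = t *s g"
proof (rule ccontr)
  assume N: "\<not> (\<exists>r t. t \<in> Ks \<and> f r = t *s g)"
  have D: "\<forall>r. \<exists>\<delta>. vec_in Ks \<delta> \<and> bdot g \<delta> = 0 \<and> bdot (f r) \<delta> \<noteq> 0"
  proof
    fix r
    show "\<exists>\<delta>. vec_in Ks \<delta> \<and> bdot g \<delta> = 0 \<and> bdot (f r) \<delta> \<noteq> 0"
    proof (rule ccontr)
      assume "\<not> (\<exists>\<delta>. vec_in Ks \<delta> \<and> bdot g \<delta> = 0 \<and> bdot (f r) \<delta> \<noteq> 0)"
      then have "\<forall>\<delta>. vec_in Ks \<delta> \<longrightarrow> bdot g \<delta> = 0 \<longrightarrow> bdot (f r) \<delta> = 0" by blast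
      then have "\<exists>t. t \<in> Ks \<and> f r = t *s g" using annih[OF K g0 gin] fin by blast
      then show False using N by blast
    qed
  qed
  obtain \<gamma> where \<gamma>: "vec_in Ks \<gamma>" "bdot g \<gamma> = 0" "\<forall>r\<in>UNIV. bdot (f r) \<gamma> \<noteq> 0"
    using avoid_union[OF K gin D, of UNIV] by auto
  have "(\<Prod>r\<in>UNIV. bdot (f r) \<gamma>) \<noteq> 0" using \<gamma>(3) by simp
  then show False using H \<gamma>(1,2) by blast
qed

lemma slice_comb_cpd: "slice_comb (cpd A B C) \<gamma> = A ** (\<chi> i j. if i = j then bdot (column i C) \<gamma> else 0) ** transpose B"
proof -
  have "(slice_comb (cpd A B C) \<gamma>) $ i $ j = (A ** (\<chi> i j. if i = j then bdot (column i C) \<gamma> else 0) ** transpose B) $ i $ j" for i j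
  proof -
    have "(A ** (\<chi> i j. if i = j then bdot (column i C) \<gamma> else 0)) $ i $ r = A$i$r * bdot (column r C) \<gamma>" for r
    proof -
      have "(A ** (\<chi> i j. if i = j then bdot (column i C) \<gamma> else 0)) $ i $ r
          = (\<Sum>s\<in>UNIV. if s = r then A$i$s * bdot (column s C) \<gamma> else 0)"
        unfolding matrix_matrix_mult_def by (simp add: if_distrib cong: if_cong)
      then show ?thesis by simp
    qed
    then have "(A ** (\<chi> i j. if i = j then bdot (column i C) \<gamma> else 0) ** transpose B) $ i $ j
       = (\<Sum>r\<in>UNIV. A$i$r * bdot (column r C) \<gamma> * B$j$r)"
      by (simp add: matrix_matrix_mult_def transpose_def)
    also have "\<dots> = (\<Sum>r\<in>UNIV. \<Sum>k\<in>UNIV. \<gamma>$k * (A$i$r * B$j$r * C$k$r))"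
      by (simp add: bdot_def column_def sum_distrib_left sum_distrib_right mult_ac)
    also have "\<dots> = (\<Sum>k\<in>UNIV. \<Sum>r\<in>UNIV. \<gamma>$k * (A$i$r * B$j$r * C$k$r))" by (rule sum.swap)
    also have "\<dots> = (slice_comb (cpd A B C) \<gamma>) $ i $ j"
      by (simp add: slice_comb_def cpd_def sum_distrib_left)
    finally show ?thesis by simp
  qed
  then show ?thesis by (simp add: vec_eq_iff)
qed

lemma det_slice_cpd: fixes A B :: "complex^'r::finite^'r"
  shows "det (slice_comb (cpd A B C) \<gamma>) = det A * det B * (\<Prod>r\<in>UNIV. bdot (column r C) \<gamma>)"
proof -
  have "det (\<chi> i j. if i = j then bdot (column i C) \<gamma> else (0::complex)) = (\<Prod>r\<in>(UNIV::'r set). bdot (column r C) \<gamma>)"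
    by (subst det_diagonal) auto
  then show ?thesis by (simp add: slice_comb_cpd det_mul)
qed

lemma spec_T_match:
  fixes A B :: "complex^'r::finite^'r" and C :: "complex^'r^'k::finite"
  assumes K: "field_K Ks" and A: "invertible A" and B: "invertible B" and Cin: "mat_in Ks C"
    and Cu: "\<forall>r. norm (column r C) = 1" and sp: "is_spectrum Ks (cpd A B C) \<Lambda>"
  shows "\<exists>j. kspan Ks (\<Lambda> j) = kspan Ks (column k C)"
proof -
  have g0: "column k C \<noteq> 0" using Cu by (metis norm_zero zero_neq_one)
  have gin: "vec_in Ks (column k C)" using Cin by auto
  have fin: "\<forall>j. vec_in Ks (\<Lambda> j)" using sp by (simp add: is_spectrum_def)
  have H: "\<forall>\<gamma>. vec_in Ks \<gamma> \<longrightarrow> bdot (column k C) \<gamma> = 0 \<longrightarrow> (\<Prod>j\<in>UNIV. bdot (\<Lambda> j) \<gamma>) = 0"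
  proof (intro allI impI)
    fix \<gamma> assume g: "vec_in Ks \<gamma>" "bdot (column k C) \<gamma> = 0"
    have "(\<Prod>j\<in>UNIV. bdot (\<Lambda> j) \<gamma>) = det (slice_comb (cpd A B C) \<gamma>)"
      using sp g(1) by (simp add: is_spectrum_def bdot_def)
    also have "\<dots> = det A * det B * (\<Prod>r\<in>UNIV. bdot (column r C) \<gamma>)" by (rule det_slice_cpd)
    also have "\<dots> = 0" using g(2) by (auto intro: prod_zero)
    finally show "(\<Prod>j\<in>UNIV. bdot (\<Lambda> j) \<gamma>) = 0" .
  qed
  obtain j t where jt: "t \<in> Ks" "\<Lambda> j = t *s column k C"
    using factor_lemma[OF K g0 gin fin H] by blast
  have "t \<noteq> 0" using jt sp by (auto simp: is_spectrum_def)
  then have "kspan Ks (\<Lambda> j) = kspan Ks (column k C)" using jt kspan_scale[OF K] by simp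
  then show ?thesis by blast
qed

lemma smi_cpd_inv:
  fixes AW BW :: "complex^'r::finite^'r" and CW :: "complex^'r^'k::finite"
  assumes "slice_mix_invertible Ks (cpd AW BW CW)"
  shows "invertible AW" "invertible BW"
proof -
  obtain \<gamma> where "det (slice_comb (cpd AW BW CW) \<gamma>) \<noteq> 0"
    using assms by (auto simp: slice_mix_invertible_def)
  then have "det AW \<noteq> 0" "det BW \<noteq> 0" by (auto simp: det_slice_cpd)
  then show "invertible AW" "invertible BW" by (auto simp: invertible_det_nz)
qed

lemma spec_W_match_cpd:
  fixes AW BW :: "complex^'r::finite^'r" and CW :: "complex^'r^'k::finite"
  assumes K: "field_K Ks" and AW: "invertible AW" and BW: "invertible BW" and CWin: "mat_in Ks CW"
    and sp: "is_spectrum Ks (cpd AW BW CW) \<Lambda>"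
  shows "\<exists>s t. column s CW = t *s \<Lambda> i"
proof -
  have g0: "\<Lambda> i \<noteq> 0" and gin: "vec_in Ks (\<Lambda> i)" using sp by (auto simp: is_spectrum_def)
  have fin: "\<forall>r. vec_in Ks (column r CW)" using CWin by auto
  have dnz: "det AW * det BW \<noteq> 0" using AW BW by (simp add: invertible_det_nz)
  have H: "\<forall>\<gamma>. vec_in Ks \<gamma> \<longrightarrow> bdot (\<Lambda> i) \<gamma> = 0 \<longrightarrow> (\<Prod>r\<in>UNIV. bdot (column r CW) \<gamma>) = 0"
  proof (intro allI impI)
    fix \<gamma> assume g: "vec_in Ks \<gamma>" "bdot (\<Lambda> i) \<gamma> = 0"
    have "det AW * det BW * (\<Prod>r\<in>UNIV. bdot (column r CW) \<gamma>) = det (slice_comb (cpd AW BW CW) \<gamma>)"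
      by (rule det_slice_cpd[symmetric])
    also have "\<dots> = (\<Prod>j\<in>UNIV. bdot (\<Lambda> j) \<gamma>)"
      using sp g(1) by (simp add: is_spectrum_def bdot_def)
    also have "\<dots> = 0" using g(2) by (auto intro: prod_zero)
    finally show "(\<Prod>r\<in>UNIV. bdot (column r CW) \<gamma>) = 0" using dnz by simp
  qed
  show ?thesis using factor_lemma[OF K g0 gin fin H] by blast
qed

lemma jge_case2:
  fixes AW BW :: "complex^'r::finite^'r" and CW :: "complex^'r^'k::finite"
  assumes AW: "invertible AW" and BW: "invertible BW" and x0: "x \<noteq> 0"
    and jge: "\<forall>l. slice (cpd AW BW CW) l *v x = lam$l *s y"
  shows "\<exists>s t. column s CW = t *s lam"
proof -
  define z where "z = transpose BW *v x"
  have "z \<noteq> 0" unfolding z_def by (rule vec_nonzero_transpose[OF BW x0])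
  then obtain s where s: "z$s \<noteq> 0" by (auto simp: vec_eq_iff)
  define u where "u = matrix_inv AW *v y"
  have "CW$l$s = (u$s / z$s) * lam$l" for l
  proof -
    have "matrix_inv AW *v (slice (cpd AW BW CW) l *v x) = (\<chi> r. CW$l$r * z$r)"
      by (simp only: slice_cpd minv_vec[OF AW] z_def)
    moreover have "matrix_inv AW *v (slice (cpd AW BW CW) l *v x) = lam$l *s u"
      by (simp only: jge mv_scale u_def)
    ultimately have "(\<chi> r. CW$l$r * z$r) $ s = (lam$l *s u) $ s" by simp
    then have "CW$l$s * z$s = lam$l * u$s" by simp
    then show ?thesis using s by (simp add: field_simps)
  qed
  then have "column s CW = (u$s / z$s) *s lam" by (simp add: vec_eq_iff column_def)
  then show ?thesis by blast
qed

lemma specvar_bound: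
  fixes \<Lambda>T \<Lambda>W :: "'r::finite \<Rightarrow> complex^'k" and C :: "complex^'r^'k"
  assumes match: "\<forall>k. \<exists>j. kspan Ks (\<Lambda>T j) = kspan Ks (column k C)"
    and b: "\<forall>i. Min (range (\<lambda>k. chordal Ks (kspan Ks (column k C)) (kspan Ks (\<Lambda>W i)))) \<le> bnd"
  shows "spec_var Ks \<Lambda>T \<Lambda>W \<le> bnd"
  unfolding spec_var_def
proof (subst Max_le_iff, simp, simp, intro ballI)
  fix a assume "a \<in> range (\<lambda>i. Min (range (\<lambda>j. chordal Ks (kspan Ks (\<Lambda>T j)) (kspan Ks (\<Lambda>W i)))))"
  then obtain i where a: "a = Min (range (\<lambda>j. chordal Ks (kspan Ks (\<Lambda>T j)) (kspan Ks (\<Lambda>W i))))" by blast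
  have "Min (range (\<lambda>k. chordal Ks (kspan Ks (column k C)) (kspan Ks (\<Lambda>W i))))
      \<in> range (\<lambda>k. chordal Ks (kspan Ks (column k C)) (kspan Ks (\<Lambda>W i)))" by (rule Min_in) auto
  then obtain k where k: "Min (range (\<lambda>k. chordal Ks (kspan Ks (column k C)) (kspan Ks (\<Lambda>W i))))
      = chordal Ks (kspan Ks (column k C)) (kspan Ks (\<Lambda>W i))" by blast
  obtain j where j: "kspan Ks (\<Lambda>T j) = kspan Ks (column k C)" using match by blast
  have "a \<le> chordal Ks (kspan Ks (\<Lambda>T j)) (kspan Ks (\<Lambda>W i))" unfolding a by (rule Min_le) auto
  also have "\<dots> = Min (range (\<lambda>k. chordal Ks (kspan Ks (column k C)) (kspan Ks (\<Lambda>W i))))" unfolding j k ..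
  also have "\<dots> \<le> bnd" using b by blast
  finally show "a \<le> bnd" .
qed

lemma rank_exists: assumes K: "field_K Ks" and X: "tensor_in Ks (X::('i::finite,'j::finite,'k::finite) tensor)"
  shows "\<exists>n. rank_le Ks X n"
proof -
  define N where "N = card (UNIV :: ('i \<times> 'j) set)"
  obtain h where h: "bij_betw h {0..<N} (UNIV :: ('i \<times> 'j) set)"
    using ex_bij_betw_nat_finite[of "UNIV :: ('i \<times> 'j) set"] unfolding N_def by auto
  define a :: "nat \<Rightarrow> complex^'i" where "a r = axis (fst (h r)) 1" for r
  define b :: "nat \<Rightarrow> complex^'j" where "b r = axis (snd (h r)) 1" for r
  define c :: "nat \<Rightarrow> complex^'k" where "c r = (\<chi> k. X (fst (h r)) (snd (h r)) k)" for r
  have "X i j k = (\<Sum>r<N. (a r)$i * (b r)$j * (c r)$k)" for i j k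
  proof -
    define g where "g p = axis (fst p) (1::complex) $ i * axis (snd p) (1::complex) $ j * X (fst p) (snd p) k" for p
    have "(\<Sum>r<N. (a r)$i * (b r)$j * (c r)$k) = (\<Sum>r\<in>{0..<N}. g (h r))"
      by (simp add: atLeast0LessThan a_def b_def c_def g_def)
    also have "\<dots> = (\<Sum>p\<in>UNIV. g p)" by (rule sum.reindex_bij_betw[OF h])
    also have "\<dots> = (\<Sum>p\<in>UNIV. if p = (i, j) then X i j k else 0)"
      by (rule sum.cong) (auto simp: g_def axis_def)
    also have "\<dots> = X i j k" by simp
    finally show ?thesis by simp
  qed
  then have "X = (\<lambda>i j k. \<Sum>r<N. (a r)$i * (b r)$j * (c r)$k)" by (intro ext) simp
  moreover have "\<forall>r<N. vec_in Ks (a r) \<and> vec_in Ks (b r) \<and> vec_in Ks (c r)"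
    using K X by (auto simp: a_def b_def c_def tensor_in_def intro!: vec_in_lambda)
  ultimately show ?thesis unfolding rank_le_def by blast
qed

lemma rank_le_pad: assumes K: "field_K Ks" and r: "rank_le Ks X n" and nN: "n \<le> N"
  shows "rank_le Ks X N"
proof -
  obtain a b c where abc: "\<forall>r<n. vec_in Ks (a r) \<and> vec_in Ks (b r) \<and> vec_in Ks (c r)"
    and X: "X = (\<lambda>i j k. \<Sum>r<n. (a r)$i * (b r)$j * (c r)$k)"
    using r unfolding rank_le_def by blast
  define a' where "a' r = (if r < n then a r else 0)" for r
  define b' where "b' r = (if r < n then b r else 0)" for r
  define c' where "c' r = (if r < n then c r else 0)" for r
  have "X = (\<lambda>i j k. \<Sum>r<N. (a' r)$i * (b' r)$j * (c' r)$k)"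
  proof (intro ext)
    fix i j k
    have "(\<Sum>r<N. (a' r)$i * (b' r)$j * (c' r)$k) = (\<Sum>r<n. (a' r)$i * (b' r)$j * (c' r)$k)"
      by (rule sum.mono_neutral_right) (use nN in \<open>auto simp: a'_def\<close>)
    also have "\<dots> = (\<Sum>r<n. (a r)$i * (b r)$j * (c r)$k)" by (rule sum.cong) (auto simp: a'_def b'_def c'_def)
    finally show "X i j k = (\<Sum>r<N. (a' r)$i * (b' r)$j * (c' r)$k)" using X by simp
  qed
  moreover have "\<forall>r<N. vec_in Ks (a' r) \<and> vec_in Ks (b' r) \<and> vec_in Ks (c' r)"
    using abc K by (auto simp: a'_def b'_def c'_def)
  ultimately show ?thesis unfolding rank_le_def by blast
qed

lemma K_rank_le_imp: assumes K: "field_K Ks" and X: "tensor_in Ks X" and le: "K_rank Ks X \<le> N"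
  shows "rank_le Ks X N"
proof -
  have "rank_le Ks X (K_rank Ks X)" unfolding K_rank_def
    using rank_exists[OF K X] by (rule LeastI_ex)
  then show ?thesis by (rule rank_le_pad[OF K _ le])
qed

lemma rank_le_cpd:
  fixes X :: "('r::finite,'r,'k::finite) tensor"
  assumes r: "rank_le Ks X CARD('r)"
  shows "\<exists>A B C. mat_in Ks A \<and> mat_in Ks B \<and> mat_in Ks (C::complex^'r^'k) \<and> X = cpd A B C"
proof -
  define N where "N = CARD('r)"
  obtain a b c where abc: "\<forall>r<N. vec_in Ks (a r) \<and> vec_in Ks (b r) \<and> vec_in Ks (c r)"
    and X: "X = (\<lambda>i j k. \<Sum>r<N. (a r)$i * (b r)$j * (c r)$k)"
    using r unfolding rank_le_def N_def by blast
  obtain h where h: "bij_betw h {0..<N} (UNIV :: 'r set)"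
    using ex_bij_betw_nat_finite[of "UNIV :: 'r set"] unfolding N_def by auto
  define g where "g = inv_into {0..<N} h"
  have gh: "g (h r) = r" if "r < N" for r
    unfolding g_def using h that by (auto simp: bij_betw_def inv_into_f_f)
  have grange: "g \<rho> < N" for \<rho>
  proof -
    have "g \<rho> \<in> {0..<N}" unfolding g_def using h
      by (metis bij_betw_def inv_into_into UNIV_I)
    then show ?thesis by simp
  qed
  define A :: "complex^'r^'r" where "A = (\<chi> i \<rho>. (a (g \<rho>))$i)"
  define B :: "complex^'r^'r" where "B = (\<chi> i \<rho>. (b (g \<rho>))$i)"
  define C :: "complex^'r^'k" where "C = (\<chi> i \<rho>. (c (g \<rho>))$i)"
  have "X = cpd A B C"
  proof (intro ext)
    fix i j k
    have "cpd A B C i j k = (\<Sum>\<rho>\<in>UNIV. (a (g \<rho>))$i * (b (g \<rho>))$j * (c (g \<rho>))$k)"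
      by (simp add: cpd_def A_def B_def C_def)
    also have "\<dots> = (\<Sum>r\<in>{0..<N}. (a (g (h r)))$i * (b (g (h r)))$j * (c (g (h r)))$k)"
      by (rule sum.reindex_bij_betw[OF h, symmetric])
    also have "\<dots> = (\<Sum>r<N. (a r)$i * (b r)$j * (c r)$k)"
      by (simp add: atLeast0LessThan gh)
    finally show "X i j k = cpd A B C i j k" using X by simp
  qed
  moreover have "mat_in Ks A" "mat_in Ks B" "mat_in Ks C"
    using abc grange by (auto simp: mat_in_def A_def B_def C_def vec_inD)
  ultimately show ?thesis by blast
qed

lemma det_tendsto:
  fixes X :: "'a \<Rightarrow> complex^'n::finite^'n"
  assumes "\<And>i j. ((\<lambda>m. X m $ i $ j) \<longlongrightarrow> Y $ i $ j) F"
  shows "((\<lambda>m. det (X m)) \<longlongrightarrow> det Y) F"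
  unfolding det_def
  by (intro tendsto_intros assms)

lemma closed_Ks: "field_K Ks \<Longrightarrow> closed Ks"
  by (auto simp: field_K_def closed_complex_Reals)

lemma lim_in_Ks: assumes K: "field_K Ks" and f: "(f \<longlongrightarrow> l) sequentially" and "\<And>m. f m \<in> Ks"
  shows "l \<in> Ks"
  by (rule Lim_in_closed_set[OF closed_Ks[OF K] _ _ f]) (use assms in auto)

lemma sum_scale_vec: "(\<Sum>l\<in>S. f l *s (Y::complex^'n)) = (sum f S) *s Y"
  by (simp add: vec_eq_iff sum_distrib_right)

lemma cnj_sum_unit: "norm (u::complex^'n) = 1 \<Longrightarrow> (\<Sum>l\<in>UNIV. cnj (u$l) * u$l) = 1"
  using norm_sq_vec_c[of u] by (simp add: mult.commute)

lemma rankR_facts: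
  fixes A B :: "complex^'r::finite^'r" and C :: "complex^'r^'k::finite"
  assumes K: "field_K Ks" and ABC: "mat_in Ks A" "mat_in Ks B" "mat_in Ks C" and g0: "vec_in Ks \<gamma>0"
    and d0: "det (slice_comb (cpd A B C) \<gamma>0) \<noteq> 0"
  shows "\<exists>(X::complex^'r^'r) (U::complex^'k^'r).
     (\<forall>r. norm (X$r) = 1 \<and> vec_in Ks (X$r) \<and> norm (U$r) = 1 \<and> vec_in Ks (U$r) \<and>
       (\<forall>l. slice (cpd A B C) l *v X$r = (U$r)$l *s (\<Sum>l'\<in>UNIV. cnj ((U$r)$l') *s (slice (cpd A B C) l' *v X$r))))
   \<and> (\<forall>\<gamma>. det (slice_comb (cpd A B C) \<gamma>) * (\<Prod>r\<in>UNIV. bdot (U$r) \<gamma>0)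
         = det (slice_comb (cpd A B C) \<gamma>0) * (\<Prod>r\<in>UNIV. bdot (U$r) \<gamma>))"
proof -
  have dd: "det A * det B * (\<Prod>r\<in>UNIV. bdot (column r C) \<gamma>0) \<noteq> 0" using d0 by (simp add: det_slice_cpd)
  then have dB: "det B \<noteq> 0" and cg: "\<And>r. bdot (column r C) \<gamma>0 \<noteq> 0" by auto
  have B: "invertible B" using dB by (simp add: invertible_det_nz)
  have c0: "column r C \<noteq> 0" for r using cg[of r] by (auto simp: bdot_def)
  define xr where "xr r = transpose (matrix_inv B) *v axis r 1" for r
  have Bx: "transpose B *v xr r = axis r 1" for r unfolding xr_def by (rule minvT_cancel2[OF B])
  have x0: "xr r \<noteq> 0" for r using Bx[of r] by (auto simp: axis_eq_0_iff)
  have xin: "vec_in Ks (xr r)" for r unfolding xr_def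
    using K ABC B by (auto intro!: vec_in_mult mat_in_transpose minv_in simp del: transpose_matrix_vector)
  define X :: "complex^'r^'r" where "X = (\<chi> r. complex_of_real (1 / norm (xr r)) *s xr r)"
  define U :: "complex^'k^'r" where "U = (\<chi> r. complex_of_real (1 / norm (column r C)) *s column r C)"
  have nX: "norm (X$r) = 1" for r using x0[of r] by (simp add: X_def norm_vsmult norm_divide)
  have nU: "norm (U$r) = 1" for r using c0[of r] by (simp add: U_def norm_vsmult norm_divide)
  have Xin: "vec_in Ks (X$r)" for r unfolding X_def using K xin by (auto intro!: vec_in_scale)
  have Uin: "vec_in Ks (U$r)" for r unfolding U_def using K ABC by (auto intro!: vec_in_scale)
  have CU: "C$l$r = complex_of_real (norm (column r C)) * (U$r)$l" for l r
    using c0[of r] by (simp add: U_def column_def)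
  define Y where "Y r = (complex_of_real (1 / norm (xr r)) * complex_of_real (norm (column r C))) *s (A *v axis r 1)" for r
  have SX: "slice (cpd A B C) l *v X$r = (U$r)$l *s Y r" for l r
  proof -
    have "slice (cpd A B C) l *v xr r = C$l$r *s (A *v axis r 1)"
      by (simp only: slice_cpd Bx chi_axis mv_scale)
    then have "slice (cpd A B C) l *v X$r = complex_of_real (1 / norm (xr r)) *s (C$l$r *s (A *v axis r 1))"
      by (simp add: X_def mv_scale)
    then show ?thesis by (simp add: Y_def CU vector_smult_assoc mult_ac)
  qed
  have rel: "slice (cpd A B C) l *v X$r = (U$r)$l *s (\<Sum>l'\<in>UNIV. cnj ((U$r)$l') *s (slice (cpd A B C) l' *v X$r))" for l r
  proof -
    have "(\<Sum>l'\<in>UNIV. cnj ((U$r)$l') *s (slice (cpd A B C) l' *v X$r)) = (\<Sum>l'\<in>UNIV. (cnj ((U$r)$l') * (U$r)$l') *s Y r)"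
      by (simp add: SX vector_smult_assoc)
    also have "\<dots> = Y r" by (simp only: sum_scale_vec cnj_sum_unit[OF nU]) simp
    finally show ?thesis by (simp add: SX)
  qed
  have bU: "bdot (column r C) \<gamma> = complex_of_real (norm (column r C)) * bdot (U$r) \<gamma>" for r \<gamma>
    by (simp add: U_def bdot_scale_left c0)
  have det: "det (slice_comb (cpd A B C) \<gamma>) = (det A * det B * (\<Prod>r\<in>UNIV. complex_of_real (norm (column r C)))) * (\<Prod>r\<in>UNIV. bdot (U$r) \<gamma>)" for \<gamma>
    by (simp add: det_slice_cpd bU prod.distrib mult_ac)
  have "\<forall>\<gamma>. det (slice_comb (cpd A B C) \<gamma>) * (\<Prod>r\<in>UNIV. bdot (U$r) \<gamma>0)
         = det (slice_comb (cpd A B C) \<gamma>0) * (\<Prod>r\<in>UNIV. bdot (U$r) \<gamma>)"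
    by (intro allI, simp only: det mult_ac)
  then show ?thesis using nX nU Xin Uin rel by blast
qed

lemma border_seq:
  fixes W :: "('r::finite,'r,'k::finite) tensor"
  assumes K: "field_K Ks" and Win: "tensor_in Ks W" and br: "border_K_rank Ks W = CARD('r)"
  shows "\<exists>S. (\<forall>m. tensor_in Ks (S m) \<and> K_rank Ks (S m) \<le> CARD('r)) \<and>
      (\<forall>i j k. (\<lambda>m. S m i j k) \<longlonglongrightarrow> W i j k)"
proof -
  let ?P = "\<lambda>n. \<exists>S :: nat \<Rightarrow> ('r,'r,'k) tensor.
      (\<forall>m. tensor_in Ks (S m) \<and> K_rank Ks (S m) \<le> n) \<and>
      (\<forall>i j k. (\<lambda>m. S m i j k) \<longlonglongrightarrow> W i j k)"
  have "?P (K_rank Ks W)" by (rule exI[of _ "\<lambda>m. W"]) (use Win in auto)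
  then have "?P (LEAST n. ?P n)" by (rule LeastI)
  then show ?thesis using br unfolding border_K_rank_def by simp
qed

lemma norm_rows_bound: "(\<forall>r. norm ((X::complex^'n^'r::finite) $ r) = 1) \<Longrightarrow> norm X \<le> real CARD('r)"
proof -
  assume h: "\<forall>r. norm (X $ r) = 1"
  have "norm X \<le> (\<Sum>r\<in>UNIV. norm (X$r))" unfolding norm_vec_def by (rule L2_set_le_sum) simp
  also have "\<dots> = real CARD('r)" using h by simp
  finally show ?thesis .
qed

lemma border_jge:
  fixes W :: "('r::finite,'r,'k::finite) tensor" and \<Lambda> :: "'r \<Rightarrow> complex^'k"
  assumes K: "field_K Ks" and Win: "tensor_in Ks W" and smi: "slice_mix_invertible Ks W"
    and br: "border_K_rank Ks W = CARD('r)" and sp: "is_spectrum Ks W \<Lambda>"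
  shows "\<exists>x y. vec_in Ks x \<and> x \<noteq> 0 \<and> (\<forall>l. slice W l *v x = (\<Lambda> i)$l *s y)"
proof -
  obtain S where Sin: "\<forall>m. tensor_in Ks (S m) \<and> K_rank Ks (S m) \<le> CARD('r)"
    and Sconv: "\<forall>i j k. (\<lambda>m. S m i j k) \<longlonglongrightarrow> W i j k"
    using border_seq[OF K Win br] by blast
  define QA where "QA m p \<longleftrightarrow> mat_in Ks (fst p) \<and> mat_in Ks (fst (snd p)) \<and> mat_in Ks (snd (snd p) :: complex^'r^'k)
      \<and> S m = cpd (fst p) (fst (snd p)) (snd (snd p))" for m p
  have "\<forall>m. \<exists>p. QA m p"
  proof
    fix m
    have "rank_le Ks (S m) CARD('r)" by (rule K_rank_le_imp[OF K]) (use Sin in auto)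
    then have "\<exists>A B C. mat_in Ks A \<and> mat_in Ks B \<and> mat_in Ks (C::complex^'r^'k) \<and> S m = cpd A B C"
      by (rule rank_le_cpd)
    then show "\<exists>p. QA m p" unfolding QA_def by auto
  qed
  then have "\<exists>f. \<forall>m. QA m (f m)" by (rule choice)
  then obtain fp where fp: "\<forall>m. QA m (fp m)" by blast
  define AA where "AA m = fst (fp m)" for m
  define BB where "BB m = fst (snd (fp m))" for m
  define CC where "CC m = snd (snd (fp m))" for m
  have ABC: "\<forall>m. mat_in Ks (AA m) \<and> mat_in Ks (BB m) \<and> mat_in Ks (CC m :: complex^'r^'k) \<and> S m = cpd (AA m) (BB m) (CC m)"
    using fp unfolding QA_def AA_def BB_def CC_def by blast
  obtain \<gamma>0 where g0: "vec_in Ks \<gamma>0" "det (slice_comb W \<gamma>0) \<noteq> 0"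
    using smi by (auto simp: slice_mix_invertible_def)
  have scconv: "(\<lambda>m. slice_comb (S m) \<gamma> $ i $ j) \<longlonglongrightarrow> slice_comb W \<gamma> $ i $ j" for \<gamma> i j
    unfolding slice_comb_def using Sconv by (simp, intro tendsto_intros) auto
  have detconv: "(\<lambda>m. det (slice_comb (S m) \<gamma>)) \<longlonglongrightarrow> det (slice_comb W \<gamma>)" for \<gamma>
    by (rule det_tendsto) (rule scconv)
  have "eventually (\<lambda>m. det (slice_comb (S m) \<gamma>0) \<noteq> 0) sequentially"
    by (rule tendsto_imp_eventually_ne[OF detconv g0(2)])
  then obtain N0 where N0: "\<And>m. m \<ge> N0 \<Longrightarrow> det (slice_comb (S m) \<gamma>0) \<noteq> 0"
    unfolding eventually_sequentially by blast
  define S' where "S' m = S (m + N0)" for m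
  define Q where "Q m (X :: complex^'r^'r) (U :: complex^'k^'r) \<longleftrightarrow>
     (\<forall>r. norm (X $r) = 1 \<and> vec_in Ks (X $r) \<and> norm (U $r) = 1 \<and> vec_in Ks (U $r) \<and>
       (\<forall>l. slice (S' m) l *v X $r = (U $r)$l *s (\<Sum>l'\<in>UNIV. cnj ((U $r)$l') *s (slice (S' m) l' *v X $r))))
   \<and> (\<forall>\<gamma>. det (slice_comb (S' m) \<gamma>) * (\<Prod>r\<in>UNIV. bdot (U $r) \<gamma>0)
         = det (slice_comb (S' m) \<gamma>0) * (\<Prod>r\<in>UNIV. bdot (U $r) \<gamma>))" for m X U
  have "\<exists>X U. Q m X U" for m
  proof -
    have e: "S' m = cpd (AA (m + N0)) (BB (m + N0)) (CC (m + N0))" using ABC by (simp add: S'_def)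
    have d: "det (slice_comb (cpd (AA (m + N0)) (BB (m + N0)) (CC (m + N0))) \<gamma>0) \<noteq> 0"
      using N0[of "m + N0"] e by (simp add: S'_def)
    show "\<exists>X U. Q m X U"
      unfolding Q_def e by (rule rankR_facts[OF K _ _ _ g0(1) d]) (use ABC in auto)
  qed
  then have "\<forall>m. \<exists>p. Q m (fst p) (snd p)" by (simp add: split_paired_Ex)
  then have "\<exists>f. \<forall>m. Q m (fst (f m)) (snd (f m))" by (rule choice)
  then obtain fq where fq: "\<forall>m. Q m (fst (fq m)) (snd (fq m))" by blast
  define XX where "XX m = fst (fq m)" for m
  define UU where "UU m = snd (fq m)" for m
  have XU: "\<forall>m. (\<forall>r. norm ((XX m) $r) = 1 \<and> vec_in Ks ((XX m) $r) \<and> norm ((UU m) $r) = 1 \<and> vec_in Ks ((UU m) $r) \<and>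
       (\<forall>l. slice (S' m) l *v (XX m) $r = ((UU m) $r)$l *s (\<Sum>l'\<in>UNIV. cnj (((UU m) $r)$l') *s (slice (S' m) l' *v (XX m) $r))))
   \<and> (\<forall>\<gamma>. det (slice_comb (S' m) \<gamma>) * (\<Prod>r\<in>UNIV. bdot ((UU m) $r) \<gamma>0)
         = det (slice_comb (S' m) \<gamma>0) * (\<Prod>r\<in>UNIV. bdot ((UU m) $r) \<gamma>))"
    using fq unfolding Q_def XX_def UU_def by blast
  have bnd: "bounded (range (\<lambda>m. (XX m, UU m)))"
    unfolding bounded_iff
  proof (intro exI ballI)
    fix p assume "p \<in> range (\<lambda>m. (XX m, UU m))"
    then obtain m where p: "p = (XX m, UU m)" by blast
    have "norm p \<le> norm (XX m) + norm (UU m)" unfolding p by (rule norm_Pair_le)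
    also have "\<dots> \<le> real CARD('r) + real CARD('r)"
      using norm_rows_bound[of "XX m"] norm_rows_bound[of "UU m"] XU by (intro add_mono) auto
    finally show "norm p \<le> real CARD('r) + real CARD('r)" .
  qed
  obtain lim \<phi> where \<phi>: "strict_mono \<phi>" and lim: "((\<lambda>m. (XX m, UU m)) \<circ> \<phi>) \<longlonglongrightarrow> lim"
    using bounded_imp_convergent_subsequence[OF bnd] by blast
  define Xl where "Xl = fst lim"
  define Ul where "Ul = snd lim"
  have Xc: "(\<lambda>m. XX (\<phi> m)) \<longlonglongrightarrow> Xl" unfolding Xl_def using tendsto_fst[OF lim] by (simp add: o_def)
  have Uc: "(\<lambda>m. UU (\<phi> m)) \<longlonglongrightarrow> Ul" unfolding Ul_def using tendsto_snd[OF lim] by (simp add: o_def)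
  have Xce: "(\<lambda>m. (XX (\<phi> m)) $ r $ j) \<longlonglongrightarrow> Xl $ r $ j" for r j by (intro tendsto_vec_nth Xc)
  have Uce: "(\<lambda>m. (UU (\<phi> m)) $ r $ j) \<longlonglongrightarrow> Ul $ r $ j" for r j by (intro tendsto_vec_nth Uc)
  have sm: "strict_mono (\<lambda>m. \<phi> m + N0)" using \<phi> by (simp add: strict_mono_def)
  have S'c: "(\<lambda>m. S' (\<phi> m) i j k) \<longlonglongrightarrow> W i j k" for i j k
    using LIMSEQ_subseq_LIMSEQ[OF Sconv[rule_format, of i j k] sm] by (simp add: o_def S'_def)
  have nX: "norm (Xl $ r) = 1" for r
  proof -
    have c1: "(\<lambda>m. norm ((XX (\<phi> m)) $ r)) \<longlonglongrightarrow> norm (Xl $ r)" by (intro tendsto_intros Xc)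
    have "(\<lambda>m. norm ((XX (\<phi> m)) $ r)) = (\<lambda>m. 1)" using XU by auto
    then have c2: "(\<lambda>m. norm ((XX (\<phi> m)) $ r)) \<longlonglongrightarrow> 1" by simp
    show ?thesis by (rule LIMSEQ_unique[OF c1 c2])
  qed
  have nU: "norm (Ul $ r) = 1" for r
  proof -
    have c1: "(\<lambda>m. norm ((UU (\<phi> m)) $ r)) \<longlonglongrightarrow> norm (Ul $ r)" by (intro tendsto_intros Uc)
    have "(\<lambda>m. norm ((UU (\<phi> m)) $ r)) = (\<lambda>m. 1)" using XU by auto
    then have c2: "(\<lambda>m. norm ((UU (\<phi> m)) $ r)) \<longlonglongrightarrow> 1" by simp
    show ?thesis by (rule LIMSEQ_unique[OF c1 c2])
  qed
  have Xin: "vec_in Ks (Xl $ r)" for r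
    unfolding vec_in_def by (intro allI lim_in_Ks[OF K Xce]) (use XU in \<open>auto simp: vec_inD\<close>)
  have Uin: "vec_in Ks (Ul $ r)" for r
    unfolding vec_in_def by (intro allI lim_in_Ks[OF K Uce]) (use XU in \<open>auto simp: vec_inD\<close>)
  define y where "y r = (\<Sum>l'\<in>UNIV. cnj ((Ul$r)$l') *s (slice W l' *v Xl$r))" for r
  have rel: "slice W l *v Xl$r = (Ul$r)$l *s y r" for l r
  proof -
    have "(slice W l *v Xl$r) $ i = ((Ul$r)$l *s y r) $ i" for i
    proof -
      have L: "(\<lambda>m. (slice (S' (\<phi> m)) l *v (XX (\<phi> m)) $r) $ i) \<longlonglongrightarrow> (slice W l *v Xl$r) $ i"
        unfolding matrix_vector_mult_def slice_def by (simp, intro tendsto_intros S'c Xce)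
      have R: "(\<lambda>m. (((UU (\<phi> m)) $r)$l *s (\<Sum>l'\<in>UNIV. cnj (((UU (\<phi> m)) $r)$l') *s (slice (S' (\<phi> m)) l' *v (XX (\<phi> m)) $r))) $ i)
          \<longlonglongrightarrow> ((Ul$r)$l *s y r) $ i"
        unfolding y_def matrix_vector_mult_def slice_def
        by (simp add: sum_component, intro tendsto_intros S'c Xce Uce)
      have "(\<lambda>m. (slice (S' (\<phi> m)) l *v (XX (\<phi> m)) $r) $ i) =
          (\<lambda>m. (((UU (\<phi> m)) $r)$l *s (\<Sum>l'\<in>UNIV. cnj (((UU (\<phi> m)) $r)$l') *s (slice (S' (\<phi> m)) l' *v (XX (\<phi> m)) $r))) $ i)"
      proof (rule ext)
        fix m
        have "slice (S' (\<phi> m)) l *v (XX (\<phi> m)) $r = ((UU (\<phi> m)) $r)$l *s (\<Sum>l'\<in>UNIV. cnj (((UU (\<phi> m)) $r)$l') *s (slice (S' (\<phi> m)) l' *v (XX (\<phi> m)) $r))"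
          using XU by blast
        then show "(slice (S' (\<phi> m)) l *v (XX (\<phi> m)) $r) $ i = (((UU (\<phi> m)) $r)$l *s (\<Sum>l'\<in>UNIV. cnj (((UU (\<phi> m)) $r)$l') *s (slice (S' (\<phi> m)) l' *v (XX (\<phi> m)) $r))) $ i"
          by (rule arg_cong)
      qed
      then show ?thesis using LIMSEQ_unique[OF L] R by simp
    qed
    then show ?thesis by (simp add: vec_eq_iff)
  qed
  have detrel: "det (slice_comb W \<gamma>) * (\<Prod>r\<in>UNIV. bdot (Ul$r) \<gamma>0) = det (slice_comb W \<gamma>0) * (\<Prod>r\<in>UNIV. bdot (Ul$r) \<gamma>)" for \<gamma>
  proof -
    have sc': "(\<lambda>m. slice_comb (S' (\<phi> m)) \<gamma>' $ i $ j) \<longlonglongrightarrow> slice_comb W \<gamma>' $ i $ j" for \<gamma>' i j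
      unfolding slice_comb_def by (simp, intro tendsto_intros S'c)
    have dc: "(\<lambda>m. det (slice_comb (S' (\<phi> m)) \<gamma>')) \<longlonglongrightarrow> det (slice_comb W \<gamma>')" for \<gamma>'
      by (rule det_tendsto) (rule sc')
    have bc: "(\<lambda>m. \<Prod>r\<in>UNIV. bdot ((UU (\<phi> m)) $r) \<gamma>') \<longlonglongrightarrow> (\<Prod>r\<in>UNIV. bdot (Ul$r) \<gamma>')" for \<gamma>'
      unfolding bdot_def by (intro tendsto_intros Uce)
    have L: "(\<lambda>m. det (slice_comb (S' (\<phi> m)) \<gamma>) * (\<Prod>r\<in>UNIV. bdot ((UU (\<phi> m)) $r) \<gamma>0))
        \<longlonglongrightarrow> det (slice_comb W \<gamma>) * (\<Prod>r\<in>UNIV. bdot (Ul$r) \<gamma>0)"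
      by (intro tendsto_mult dc bc)
    have R: "(\<lambda>m. det (slice_comb (S' (\<phi> m)) \<gamma>0) * (\<Prod>r\<in>UNIV. bdot ((UU (\<phi> m)) $r) \<gamma>))
        \<longlonglongrightarrow> det (slice_comb W \<gamma>0) * (\<Prod>r\<in>UNIV. bdot (Ul$r) \<gamma>)"
      by (intro tendsto_mult dc bc)
    have "(\<lambda>m. det (slice_comb (S' (\<phi> m)) \<gamma>) * (\<Prod>r\<in>UNIV. bdot ((UU (\<phi> m)) $r) \<gamma>0))
        = (\<lambda>m. det (slice_comb (S' (\<phi> m)) \<gamma>0) * (\<Prod>r\<in>UNIV. bdot ((UU (\<phi> m)) $r) \<gamma>))"
    proof (rule ext)
      fix m show "det (slice_comb (S' (\<phi> m)) \<gamma>) * (\<Prod>r\<in>UNIV. bdot ((UU (\<phi> m)) $r) \<gamma>0)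
        = det (slice_comb (S' (\<phi> m)) \<gamma>0) * (\<Prod>r\<in>UNIV. bdot ((UU (\<phi> m)) $r) \<gamma>)"
        using XU by blast
    qed
    then show ?thesis using LIMSEQ_unique[OF L] R by simp
  qed
  have g0i: "\<Lambda> i \<noteq> 0" and gini: "vec_in Ks (\<Lambda> i)" using sp by (auto simp: is_spectrum_def)
  have H: "\<forall>\<gamma>. vec_in Ks \<gamma> \<longrightarrow> bdot (\<Lambda> i) \<gamma> = 0 \<longrightarrow> (\<Prod>r\<in>UNIV. bdot (Ul$r) \<gamma>) = 0"
  proof (intro allI impI)
    fix \<gamma> assume g: "vec_in Ks \<gamma>" "bdot (\<Lambda> i) \<gamma> = 0"
    have "det (slice_comb W \<gamma>) = (\<Prod>j\<in>UNIV. bdot (\<Lambda> j) \<gamma>)"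
      using sp g(1) by (simp add: is_spectrum_def bdot_def)
    also have "\<dots> = 0" using g(2) by (auto intro: prod_zero)
    finally have "det (slice_comb W \<gamma>0) * (\<Prod>r\<in>UNIV. bdot (Ul$r) \<gamma>) = 0" using detrel[of \<gamma>] by simp
    then show "(\<Prod>r\<in>UNIV. bdot (Ul$r) \<gamma>) = 0" using g0(2) by simp
  qed
  obtain r t where rt: "t \<in> Ks" "Ul$r = t *s \<Lambda> i"
    using factor_lemma[OF K g0i gini _ H] Uin by blast
  have "slice W l *v Xl$r = (\<Lambda> i)$l *s (t *s y r)" for l
    using rel[of l r] rt by (simp add: vector_smult_assoc mult.commute)
  moreover have "Xl$r \<noteq> 0" using nX[of r] by auto
  ultimately show ?thesis using Xin by blast
qed

lemma mode1_id: "mode1 X (mat 1) = X"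
  by (simp add: mode1_def mat_def delta_sum)
lemma mode2_id: "mode2 X (mat 1) = X"
  by (simp add: mode2_def mat_def delta_sum)

lemma mat1_in: "field_K Ks \<Longrightarrow> mat_in Ks (mat 1 :: complex^'n^'n)"
  by (auto simp: mat_in_def mat_def)

lemma mat1_bound: "norm (transpose (mat 1 :: complex^'n^'n) *v u) \<le> 1 * norm u"
  by simp

lemma up1:
  fixes G :: "('r::finite,'r,'k::finite) tensor"
  assumes K: "field_K Ks" and lam: "lam \<noteq> 0" "vec_in Ks lam"
  shows "sp_norm Ks (mode3 G (proj_perp Ks (kspan Ks lam))) \<le> sp_norm Ks G"
proof -
  have "sp_norm Ks (mode3 (mode2 (mode1 G (mat 1)) (mat 1)) (proj_perp Ks (kspan Ks lam))) \<le> sp_norm Ks G * 1 * 1 * 1"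
    by (rule upper_modes[OF K mat1_in[OF K] mat1_in[OF K] proj_in[OF K lam]])
      (auto intro: mat1_bound simp: projT_le simp del: transpose_matrix_vector)
  then show ?thesis by (simp add: mode1_id mode2_id)
qed

lemma up2:
  fixes A B :: "complex^'r::finite^'r" and E :: "('r,'r,'k::finite) tensor"
  assumes K: "field_K Ks" and A: "invertible A" "mat_in Ks A" and B: "invertible B" "mat_in Ks B"
  shows "sp_norm Ks (mode2 (mode1 E (matrix_inv A)) (matrix_inv B)) \<le> sp_norm Ks E / (sigma_min A * sigma_min B)"
proof -
  have "sp_norm Ks (mode3 (mode2 (mode1 E (matrix_inv A)) (matrix_inv B)) (mat 1))
      \<le> sp_norm Ks E * (1 / sigma_min A) * (1 / sigma_min B) * 1"
  proof (rule upper_modes[OF K minv_in[OF K A(2) A(1)] minv_in[OF K B(2) B(1)] mat1_in[OF K]])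
    show "0 \<le> 1 / sigma_min A" using sigma_pos[OF A(1)] by simp
    show "0 \<le> 1 / sigma_min B" using sigma_pos[OF B(1)] by simp
    show "(0::real) \<le> 1" by simp
    show "norm (transpose (matrix_inv A) *v u) \<le> 1 / sigma_min A * norm u" for u
      using minvT_bound[OF A(1), of u] by simp
    show "norm (transpose (matrix_inv B) *v u) \<le> 1 / sigma_min B * norm u" for u
      using minvT_bound[OF B(1), of u] by simp
    show "norm (transpose (mat 1 :: complex^'k^'k) *v u) \<le> 1 * norm u" for u by (rule mat1_bound)
  qed
  then show ?thesis by (simp add: mode3_id)
qed

lemma min_chordal_eq:
  fixes C :: "complex^'r::finite^'k::finite"
  assumes K: "field_K Ks" and Cu: "\<forall>r. norm (column r C) = 1" and lam: "lam \<noteq> 0"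
  shows "Min (range (\<lambda>k. chordal Ks (kspan Ks (column k C)) (kspan Ks lam)))
       = Min (range (\<lambda>r. norm (proj_perp Ks (kspan Ks lam) *v column r C)))"
proof -
  have "(\<lambda>k. chordal Ks (kspan Ks (column k C)) (kspan Ks lam)) = (\<lambda>r. norm (proj_perp Ks (kspan Ks lam) *v column r C))"
    using chordal_proj[OF K _ lam] Cu by auto
  then show ?thesis by (rule arg_cong[where f="\<lambda>f. Min (range f)"])
qed

lemma min_chordal_le:
  fixes C :: "complex^'r::finite^'k::finite"
  assumes K: "field_K Ks" and Cu: "\<forall>r. norm (column r C) = 1" and lam: "lam \<noteq> 0"
    and a: "norm (proj_perp Ks (kspan Ks lam) *v column a C) \<le> b"
  shows "Min (range (\<lambda>k. chordal Ks (kspan Ks (column k C)) (kspan Ks lam))) \<le> b"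
proof -
  have "Min (range (\<lambda>r. norm (proj_perp Ks (kspan Ks lam) *v column r C))) \<le> norm (proj_perp Ks (kspan Ks lam) *v column a C)"
    by (rule Min_le) auto
  then show ?thesis unfolding min_chordal_eq[OF K Cu lam] using a by (rule order_trans)
qed

theorem theorem4p3:
  fixes Ks :: "complex set"
    and T W :: "('r::finite, 'r, 'k::finite) tensor"
    and A B :: "complex^'r^'r"
    and C :: "complex^'r^'k"
  defines "E \<equiv> (\<lambda>i j k. T i j k - W i j k)"
  defines "R \<equiv> real CARD('r)"
  assumes K: "field_K Ks"
    and T_in: "tensor_in Ks T" and W_in: "tensor_in Ks W"
    and T_rank: "K_rank Ks T = CARD('r)"
    and ABC_in: "mat_in Ks A" "mat_in Ks B" "mat_in Ks C"
    and A_inv: "invertible A" and B_inv: "invertible B"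
    and C_unit: "\<forall>r. norm (column r C) = 1"
    and T_cpd: "T = cpd A B C"
  shows
    \<comment> \<open>first chain of inequalities (JGE values), spectrum of T = spans of columns of C\<close>
    "(\<forall>L. JGE_value Ks W L \<and> geom_mult Ks W L \<ge> 1 \<longrightarrow>
        Min (range (\<lambda>k. chordal Ks (kspan Ks (column k C)) L))
          \<le> sqrt R * sp_norm Ks (mode3 (mode2 (mode1 E (matrix_inv A)) (matrix_inv B)) (proj_perp Ks L))
      \<and> sqrt R * sp_norm Ks (mode3 (mode2 (mode1 E (matrix_inv A)) (matrix_inv B)) (proj_perp Ks L))
          \<le> sqrt R * sp_norm Ks E / (sigma_min A * sigma_min B))
   \<and> \<comment> \<open>spectral variation bound\<close>
    ((slice_mix_invertible Ks W \<and> border_K_rank Ks W = CARD('r)) \<longrightarrow>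
      (\<forall>\<Lambda>T \<Lambda>W. is_spectrum Ks T \<Lambda>T \<and> is_spectrum Ks W \<Lambda>W \<longrightarrow>
        spec_var Ks \<Lambda>T \<Lambda>W \<le> sqrt R * sp_norm Ks (mode2 (mode1 E (matrix_inv A)) (matrix_inv B))
      \<and> sqrt R * sp_norm Ks (mode2 (mode1 E (matrix_inv A)) (matrix_inv B))
          \<le> sqrt R * sp_norm Ks E / (sigma_min A * sigma_min B)))
   \<and> \<comment> \<open>the factor sqrt R can be dropped in cases (1) and (2)\<close>
    ((CARD('k) = 2 \<or>
      (slice_mix_invertible Ks W \<and> K_rank Ks W = CARD('r) \<and>
       (\<exists>AW BW CW. mat_in Ks AW \<and> mat_in Ks BW \<and> mat_in Ks (CW :: complex^'r^'k) \<and>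
          W = cpd AW BW CW \<and> (AW = A \<or> BW = B)))) \<longrightarrow>
      (\<forall>L. JGE_value Ks W L \<and> geom_mult Ks W L \<ge> 1 \<longrightarrow>
        Min (range (\<lambda>k. chordal Ks (kspan Ks (column k C)) L))
          \<le> sp_norm Ks (mode3 (mode2 (mode1 E (matrix_inv A)) (matrix_inv B)) (proj_perp Ks L))
      \<and> sp_norm Ks (mode3 (mode2 (mode1 E (matrix_inv A)) (matrix_inv B)) (proj_perp Ks L))
          \<le> sp_norm Ks E / (sigma_min A * sigma_min B))
     \<and> ((slice_mix_invertible Ks W \<and> border_K_rank Ks W = CARD('r)) \<or>
         (slice_mix_invertible Ks W \<and> K_rank Ks W = CARD('r) \<and>
          (\<exists>AW BW CW. mat_in Ks AW \<and> mat_in Ks BW \<and> mat_in Ks (CW :: complex^'r^'k) \<and>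
             W = cpd AW BW CW \<and> (AW = A \<or> BW = B))) \<longrightarrow>
      (\<forall>\<Lambda>T \<Lambda>W. is_spectrum Ks T \<Lambda>T \<and> is_spectrum Ks W \<Lambda>W \<longrightarrow>
        spec_var Ks \<Lambda>T \<Lambda>W \<le> sp_norm Ks (mode2 (mode1 E (matrix_inv A)) (matrix_inv B))
      \<and> sp_norm Ks (mode2 (mode1 E (matrix_inv A)) (matrix_inv B))
          \<le> sp_norm Ks E / (sigma_min A * sigma_min B))))"
proof -
  let ?G = "mode2 (mode1 E (matrix_inv A)) (matrix_inv B)"
  let ?F = "\<lambda>L. mode3 ?G (proj_perp Ks L)"
  have E_eq: "E = (\<lambda>i j k. cpd A B C i j k - W i j k)" unfolding E_def T_cpd ..
  have Rr: "R = real CARD('r)" unfolding R_def ..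
  have sR: "0 \<le> sqrt R" by (simp add: Rr)
  have ss: "0 < sigma_min A * sigma_min B" using sigma_pos[OF A_inv] sigma_pos[OF B_inv] by simp
  have up2': "sp_norm Ks ?G \<le> sp_norm Ks E / (sigma_min A * sigma_min B)"
    by (rule up2[OF K A_inv ABC_in(1) B_inv ABC_in(2)])
  have upF: "sp_norm Ks (?F (kspan Ks lam)) \<le> sp_norm Ks ?G" if "lam \<noteq> 0" "vec_in Ks lam" for lam
    by (rule up1[OF K that])
  have upFE: "sp_norm Ks (?F (kspan Ks lam)) \<le> sp_norm Ks E / (sigma_min A * sigma_min B)"
    if "lam \<noteq> 0" "vec_in Ks lam" for lam
    using upF[OF that] up2' by linarith
  have sR_mono: "sqrt R * a \<le> sqrt R * b / (sigma_min A * sigma_min B)"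
    if "a \<le> b / (sigma_min A * sigma_min B)" for a b
  proof -
    have "sqrt R * a \<le> sqrt R * (b / (sigma_min A * sigma_min B))" by (rule mult_left_mono[OF that sR])
    then show ?thesis by simp
  qed
  have jge_ext: "\<exists>x lam y. vec_in Ks x \<and> x \<noteq> 0 \<and> lam \<noteq> 0 \<and> vec_in Ks lam \<and> L = kspan Ks lam \<and>
      (\<forall>l. slice W l *v x = lam$l *s y)" if "JGE_value Ks W L" for L
    using that unfolding JGE_value_def JGE_pair_def by blast
  have Tsp: "\<exists>j. kspan Ks (\<Lambda>T j) = kspan Ks (column k C)" if "is_spectrum Ks T \<Lambda>T" for \<Lambda>T k
    using that unfolding T_cpd by (rule spec_T_match[OF K A_inv B_inv ABC_in(3) C_unit])
  have genJ: "\<exists>a. norm (proj_perp Ks (kspan Ks lam) *v column a C) \<le> sqrt R * sp_norm Ks (?F (kspan Ks lam))"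
    if "vec_in Ks x" "x \<noteq> 0" "\<forall>l. slice W l *v x = lam$l *s y" "lam \<noteq> 0" "vec_in Ks lam" for x lam y
    unfolding Rr E_eq by (rule lower_gen[OF K A_inv B_inv ABC_in(2) ABC_in(3) that])
  have part1: "\<forall>L. JGE_value Ks W L \<and> geom_mult Ks W L \<ge> 1 \<longrightarrow>
        Min (range (\<lambda>k. chordal Ks (kspan Ks (column k C)) L))
          \<le> sqrt R * sp_norm Ks (mode3 (mode2 (mode1 E (matrix_inv A)) (matrix_inv B)) (proj_perp Ks L))
      \<and> sqrt R * sp_norm Ks (mode3 (mode2 (mode1 E (matrix_inv A)) (matrix_inv B)) (proj_perp Ks L))
          \<le> sqrt R * sp_norm Ks E / (sigma_min A * sigma_min B)"
  proof (intro allI impI)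
    fix L assume "JGE_value Ks W L \<and> geom_mult Ks W L \<ge> 1"
    then obtain x lam y where xl: "vec_in Ks x" "x \<noteq> 0" "lam \<noteq> 0" "vec_in Ks lam" "L = kspan Ks lam"
      "\<forall>l. slice W l *v x = lam$l *s y" using jge_ext by blast
    obtain a where a: "norm (proj_perp Ks (kspan Ks lam) *v column a C) \<le> sqrt R * sp_norm Ks (?F (kspan Ks lam))"
      using genJ[OF xl(1,2,6,3,4)] by blast
    show "Min (range (\<lambda>k. chordal Ks (kspan Ks (column k C)) L))
          \<le> sqrt R * sp_norm Ks (?F L) \<and> sqrt R * sp_norm Ks (?F L) \<le> sqrt R * sp_norm Ks E / (sigma_min A * sigma_min B)"
      unfolding xl(5)
      using min_chordal_le[OF K C_unit xl(3) a] sR_mono[OF upFE[OF xl(3,4)]] by simp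
  qed
  have part2: "(slice_mix_invertible Ks W \<and> border_K_rank Ks W = CARD('r)) \<longrightarrow>
      (\<forall>\<Lambda>T \<Lambda>W. is_spectrum Ks T \<Lambda>T \<and> is_spectrum Ks W \<Lambda>W \<longrightarrow>
        spec_var Ks \<Lambda>T \<Lambda>W \<le> sqrt R * sp_norm Ks (mode2 (mode1 E (matrix_inv A)) (matrix_inv B))
      \<and> sqrt R * sp_norm Ks (mode2 (mode1 E (matrix_inv A)) (matrix_inv B))
          \<le> sqrt R * sp_norm Ks E / (sigma_min A * sigma_min B))"
  proof (intro impI allI, elim conjE)
    fix \<Lambda>T \<Lambda>W assume smi: "slice_mix_invertible Ks W" and br: "border_K_rank Ks W = CARD('r)"
      and spT: "is_spectrum Ks T \<Lambda>T" and spW: "is_spectrum Ks W \<Lambda>W"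
    have b: "\<forall>i. Min (range (\<lambda>k. chordal Ks (kspan Ks (column k C)) (kspan Ks (\<Lambda>W i)))) \<le> sqrt R * sp_norm Ks ?G"
    proof
      fix i
      have li: "\<Lambda>W i \<noteq> 0" "vec_in Ks (\<Lambda>W i)" using spW by (auto simp: is_spectrum_def)
      obtain x y where xy: "vec_in Ks x" "x \<noteq> 0" "\<forall>l. slice W l *v x = (\<Lambda>W i)$l *s y"
        using border_jge[OF K W_in smi br spW, of i] by blast
      obtain a where a: "norm (proj_perp Ks (kspan Ks (\<Lambda>W i)) *v column a C) \<le> sqrt R * sp_norm Ks (?F (kspan Ks (\<Lambda>W i)))"
        using genJ[OF xy li] by blast
      have "sqrt R * sp_norm Ks (?F (kspan Ks (\<Lambda>W i))) \<le> sqrt R * sp_norm Ks ?G"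
        by (rule mult_left_mono[OF upF[OF li] sR])
      then show "Min (range (\<lambda>k. chordal Ks (kspan Ks (column k C)) (kspan Ks (\<Lambda>W i)))) \<le> sqrt R * sp_norm Ks ?G"
        using min_chordal_le[OF K C_unit li(1) order_trans[OF a]] by blast
    qed
    show "spec_var Ks \<Lambda>T \<Lambda>W \<le> sqrt R * sp_norm Ks ?G \<and> sqrt R * sp_norm Ks ?G \<le> sqrt R * sp_norm Ks E / (sigma_min A * sigma_min B)"
      using specvar_bound[OF _ b] Tsp[OF spT] sR_mono[OF up2'] by blast
  qed
  define c2 where "c2 \<longleftrightarrow> (slice_mix_invertible Ks W \<and> K_rank Ks W = CARD('r) \<and>
       (\<exists>AW BW CW. mat_in Ks AW \<and> mat_in Ks BW \<and> mat_in Ks (CW :: complex^'r^'k) \<and>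
          W = cpd AW BW CW \<and> (AW = A \<or> BW = B)))"
  have case2_bound: "norm (proj_perp Ks (kspan Ks lam) *v column s C) \<le> sp_norm Ks (?F (kspan Ks lam))"
    if "W = cpd AW BW CW" "AW = A \<or> BW = B" "lam \<noteq> 0" "vec_in Ks lam" "column s CW = t *s lam"
    for AW BW CW lam s t
  proof -
    have Pcw: "proj_perp Ks (kspan Ks lam) *v column s CW = 0"
      unfolding that(5) by (rule proj_kill[OF K that(3)])
    show ?thesis unfolding E_eq that(1)
      by (rule lower_case2[OF K A_inv B_inv ABC_in(3) that(3,4) that(2) Pcw])
  qed
  have part3: "(CARD('k) = 2 \<or> c2) \<longrightarrow>
      (\<forall>L. JGE_value Ks W L \<and> geom_mult Ks W L \<ge> 1 \<longrightarrow>
        Min (range (\<lambda>k. chordal Ks (kspan Ks (column k C)) L))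
          \<le> sp_norm Ks (mode3 (mode2 (mode1 E (matrix_inv A)) (matrix_inv B)) (proj_perp Ks L))
      \<and> sp_norm Ks (mode3 (mode2 (mode1 E (matrix_inv A)) (matrix_inv B)) (proj_perp Ks L))
          \<le> sp_norm Ks E / (sigma_min A * sigma_min B))
     \<and> (((slice_mix_invertible Ks W \<and> border_K_rank Ks W = CARD('r)) \<or> c2) \<longrightarrow>
      (\<forall>\<Lambda>T \<Lambda>W. is_spectrum Ks T \<Lambda>T \<and> is_spectrum Ks W \<Lambda>W \<longrightarrow>
        spec_var Ks \<Lambda>T \<Lambda>W \<le> sp_norm Ks (mode2 (mode1 E (matrix_inv A)) (matrix_inv B))
      \<and> sp_norm Ks (mode2 (mode1 E (matrix_inv A)) (matrix_inv B))
          \<le> sp_norm Ks E / (sigma_min A * sigma_min B)))"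
  proof (intro impI conjI allI)
    assume H3: "CARD('k) = 2 \<or> c2"
    fix L assume "JGE_value Ks W L \<and> geom_mult Ks W L \<ge> 1"
    then obtain x lam y where xl: "vec_in Ks x" "x \<noteq> 0" "lam \<noteq> 0" "vec_in Ks lam" "L = kspan Ks lam"
      "\<forall>l. slice W l *v x = lam$l *s y" using jge_ext by blast
    have "Min (range (\<lambda>k. chordal Ks (kspan Ks (column k C)) (kspan Ks lam))) \<le> sp_norm Ks (?F (kspan Ks lam))"
    proof (cases "CARD('k) = 2")
      case True
      have "Min (range (\<lambda>r. norm (proj_perp Ks (kspan Ks lam) *v column r C))) \<le> sp_norm Ks (?F (kspan Ks lam))"
        unfolding E_eq by (rule lower_K2[OF K A_inv B_inv ABC_in(2) ABC_in(3) xl(1,2,6,3,4) True])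
      then show ?thesis using min_chordal_eq[OF K C_unit xl(3)] by simp
    next
      case False
      then have c2: c2 using H3 by simp
      then obtain AW BW CW where W: "slice_mix_invertible Ks W" "W = cpd AW BW (CW :: complex^'r^'k)" "AW = A \<or> BW = B"
        unfolding c2_def by blast
      have inv: "invertible AW" "invertible BW" using smi_cpd_inv W(1,2) by auto
      obtain s t where st: "column s CW = t *s lam"
        using jge_case2[OF inv xl(2)] xl(6) W(2) by blast
      show ?thesis
        using min_chordal_le[OF K C_unit xl(3) case2_bound[OF W(2,3) xl(3,4) st]] .
    qed
    then show "Min (range (\<lambda>k. chordal Ks (kspan Ks (column k C)) L)) \<le> sp_norm Ks (?F L)"
      unfolding xl(5) .
    show "sp_norm Ks (?F L) \<le> sp_norm Ks E / (sigma_min A * sigma_min B)"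
      unfolding xl(5) by (rule upFE[OF xl(3,4)])
  next
    assume H3: "CARD('k) = 2 \<or> c2"
    fix \<Lambda>T \<Lambda>W
    assume H4: "(slice_mix_invertible Ks W \<and> border_K_rank Ks W = CARD('r)) \<or> c2"
      and sp: "is_spectrum Ks T \<Lambda>T \<and> is_spectrum Ks W \<Lambda>W"
    have b: "\<forall>i. Min (range (\<lambda>k. chordal Ks (kspan Ks (column k C)) (kspan Ks (\<Lambda>W i)))) \<le> sp_norm Ks ?G"
    proof
      fix i
      have li: "\<Lambda>W i \<noteq> 0" "vec_in Ks (\<Lambda>W i)" using sp by (auto simp: is_spectrum_def)
      have "Min (range (\<lambda>k. chordal Ks (kspan Ks (column k C)) (kspan Ks (\<Lambda>W i)))) \<le> sp_norm Ks (?F (kspan Ks (\<Lambda>W i)))"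
      proof (cases c2)
        case True
        then obtain AW BW CW where W: "slice_mix_invertible Ks W" "W = cpd AW BW (CW :: complex^'r^'k)" "AW = A \<or> BW = B"
          "mat_in Ks CW"
          unfolding c2_def by blast
        have inv: "invertible AW" "invertible BW" using smi_cpd_inv W(1,2) by auto
        have spW: "is_spectrum Ks (cpd AW BW CW) \<Lambda>W" using sp W(2) by simp
        obtain s t where st: "column s CW = t *s \<Lambda>W i"
          using spec_W_match_cpd[OF K inv W(4) spW] by blast
        show ?thesis
          using min_chordal_le[OF K C_unit li(1) case2_bound[OF W(2,3) li st]] .
      next
        case False
        then have k2: "CARD('k) = 2" and smi: "slice_mix_invertible Ks W" and br: "border_K_rank Ks W = CARD('r)"
          using H3 H4 by auto
        obtain x y where xy: "vec_in Ks x" "x \<noteq> 0" "\<forall>l. slice W l *v x = (\<Lambda>W i)$l *s y"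
          using border_jge[OF K W_in smi br, of \<Lambda>W i] sp by blast
        have "Min (range (\<lambda>r. norm (proj_perp Ks (kspan Ks (\<Lambda>W i)) *v column r C))) \<le> sp_norm Ks (?F (kspan Ks (\<Lambda>W i)))"
          unfolding E_eq by (rule lower_K2[OF K A_inv B_inv ABC_in(2) ABC_in(3) xy li k2])
        then show ?thesis using min_chordal_eq[OF K C_unit li(1)] by simp
      qed
      also have "\<dots> \<le> sp_norm Ks ?G" by (rule upF[OF li])
      finally show "Min (range (\<lambda>k. chordal Ks (kspan Ks (column k C)) (kspan Ks (\<Lambda>W i)))) \<le> sp_norm Ks ?G" .
    qed
    have spT: "is_spectrum Ks T \<Lambda>T" using sp by simp
    show "spec_var Ks \<Lambda>T \<Lambda>W \<le> sp_norm Ks ?G" using specvar_bound[OF _ b] Tsp[OF spT] by blast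
  next
    show "sp_norm Ks ?G \<le> sp_norm Ks E / (sigma_min A * sigma_min B)" by (rule up2')
  qed
  show ?thesis
    using part1 part2 part3 unfolding c2_def by blast
qed

end
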